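(* Let $\mathfrak{s}$ be a finite-dimensional real Lie algebra and let $J$ be an abelian complex structure on $\mathfrak{s}$. Then there exists an increasing sequence $\{0\}=\mathfrak{s}_0\subset\mathfrak{s}_1\subset\cdots\subset\mathfrak{s}_{r-1}\subset\mathfrak{s}_r=\mathfrak{s}$ of $J$-stable ideals of $\mathfrak{s}$ such that, for each $1\le j\le r$, the quotient $\mathfrak{s}_j/\mathfrak{s}_{j-1}$ (with the complex structure induced by $J$) is holomorphically isomorphic to a central extension of $\mathfrak{aff}(A_j)$, equipped with the abelian complex structure $J(a,b)=(b,-a)$, for some finite-dimensional real commutative associative algebra $A_j$. Here "central extension of $\mathfrak{aff}(A_j)$" means a Lie algebra $\mathfrak{h}$ with abelian complex structure $J_{\mathfrak h}$ whose center $\mathfrak{z}(\mathfrak h)$ is $J_{\mathfrak h}$-stable and such that $\mathfrak h/\mathfrak z(\mathfrak h)$ with the induced structure is holomorphically isomorphic to $\mathfrak{aff}(A_j)$.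
   Context: A complex structure on a real Lie algebra $\mathfrak g$ is a linear map $J:\mathfrak g\to\mathfrak g$ with $J^2=-\mathrm{Id}$ and $J[x,y]-[Jx,y]-[x,Jy]-J[Jx,Jy]=0$ for all $x,y\in\mathfrak g$. An abelian complex structure is a linear map $J$ with $J^2=-\mathrm{Id}$ and $[Jx,Jy]=[x,y]$ for all $x,y$ (such $J$ is automatically a complex structure). For a finite-dimensional real associative algebra $A$, $\mathfrak{aff}(A)$ is the Lie algebra $A\oplus A$ with bracket $[(a,b),(a',b')]=(aa'-a'a,\ ab'-a'b)$; when $A$ is commutative this is $[(a,b),(a',b')]=(0,ab'-a'b)$, and $J(a,b)=(b,-a)$ is an abelian complex structure on it. A holomorphic isomorphism between Lie algebras with complex structures $(\mathfrak g_1,J_1)$, $(\mathfrak g_2,J_2)$ is a Lie algebra isomorphism $f$ with $f\circ J_1=J_2\circ f$. A $J$-stable ideal $I$ gives an induced endomorphism on $\mathfrak s/I$. *)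

theory Defs
  imports "HOL-Analysis.Analysis"
begin

text \<open>All algebraic structures are given by carrier subspaces of a real vector space
  type together with operations; only their behaviour on the carrier matters.\<close>

definition linear_on :: "'a::real_vector set \<Rightarrow> ('a \<Rightarrow> 'b::real_vector) \<Rightarrow> bool" where
  "linear_on S f \<longleftrightarrow>
     (\<forall>x\<in>S. \<forall>y\<in>S. f (x + y) = f x + f y) \<and> (\<forall>x\<in>S. \<forall>c::real. f (c *\<^sub>R x) = c *\<^sub>R f x)"

definition bilinear_on :: "'a::real_vector set \<Rightarrow> ('a \<Rightarrow> 'a \<Rightarrow> 'a) \<Rightarrow> bool" where
  "bilinear_on S b \<longleftrightarrow>
     (\<forall>x\<in>S. \<forall>y\<in>S. \<forall>z\<in>S. \<forall>c::real.
        b (x + y) z = b x z + b y z \<and> b x (y + z) = b x y + b x z \<and>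
        b (c *\<^sub>R x) y = c *\<^sub>R b x y \<and> b x (c *\<^sub>R y) = c *\<^sub>R b x y)"

definition lie_algebra_on :: "'a::real_vector set \<Rightarrow> ('a \<Rightarrow> 'a \<Rightarrow> 'a) \<Rightarrow> bool" where
  "lie_algebra_on S br \<longleftrightarrow> subspace S \<and> bilinear_on S br \<and>
     (\<forall>x\<in>S. \<forall>y\<in>S. br x y \<in> S) \<and>
     (\<forall>x\<in>S. br x x = 0) \<and>
     (\<forall>x\<in>S. \<forall>y\<in>S. \<forall>z\<in>S. br x (br y z) + br y (br z x) + br z (br x y) = 0)"

definition abelian_cs_on :: "'a::real_vector set \<Rightarrow> ('a \<Rightarrow> 'a \<Rightarrow> 'a) \<Rightarrow> ('a \<Rightarrow> 'a) \<Rightarrow> bool" where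
  "abelian_cs_on S br J \<longleftrightarrow> (\<forall>x\<in>S. J x \<in> S) \<and> linear_on S J \<and>
     (\<forall>x\<in>S. J (J x) = - x) \<and> (\<forall>x\<in>S. \<forall>y\<in>S. br (J x) (J y) = br x y)"

definition ideal_on :: "'a::real_vector set \<Rightarrow> ('a \<Rightarrow> 'a \<Rightarrow> 'a) \<Rightarrow> 'a set \<Rightarrow> bool" where
  "ideal_on S br I \<longleftrightarrow> subspace I \<and> I \<subseteq> S \<and> (\<forall>x\<in>S. \<forall>y\<in>I. br x y \<in> I)"

definition center_on :: "'a::real_vector set \<Rightarrow> ('a \<Rightarrow> 'a \<Rightarrow> 'a) \<Rightarrow> 'a set" where
  "center_on S br = {x\<in>S. \<forall>y\<in>S. br x y = 0}"

text \<open>hol_quot_iso S I br J T brT JT f: f is a surjective linear map from S onto T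
  with kernel exactly I, which is a Lie algebra homomorphism and intertwines J with JT.
  (By the first isomorphism theorem, this says precisely that f induces a holomorphic
  isomorphism (S/I, induced J) \<cong> (T, JT).)\<close>
definition hol_quot_iso ::
  "'a::real_vector set \<Rightarrow> 'a set \<Rightarrow> ('a \<Rightarrow> 'a \<Rightarrow> 'a) \<Rightarrow> ('a \<Rightarrow> 'a)
   \<Rightarrow> 'b::real_vector set \<Rightarrow> ('b \<Rightarrow> 'b \<Rightarrow> 'b) \<Rightarrow> ('b \<Rightarrow> 'b) \<Rightarrow> ('a \<Rightarrow> 'b) \<Rightarrow> bool" where
  "hol_quot_iso S I br J T brT JT f \<longleftrightarrow>
     linear_on S f \<and> f ` S = T \<and> (\<forall>x\<in>S. f x = 0 \<longleftrightarrow> x \<in> I) \<and>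
     (\<forall>x\<in>S. \<forall>y\<in>S. f (br x y) = brT (f x) (f y)) \<and>
     (\<forall>x\<in>S. f (J x) = JT (f x))"

definition comm_assoc_alg_on :: "'a::real_vector set \<Rightarrow> ('a \<Rightarrow> 'a \<Rightarrow> 'a) \<Rightarrow> bool" where
  "comm_assoc_alg_on A m \<longleftrightarrow> subspace A \<and> bilinear_on A m \<and>
     (\<forall>x\<in>A. \<forall>y\<in>A. m x y \<in> A) \<and>
     (\<forall>x\<in>A. \<forall>y\<in>A. \<forall>z\<in>A. m (m x y) z = m x (m y z)) \<and>
     (\<forall>x\<in>A. \<forall>y\<in>A. m x y = m y x)"

definition aff_br :: "('a \<Rightarrow> 'a \<Rightarrow> 'a::real_vector) \<Rightarrow> 'a \<times> 'a \<Rightarrow> 'a \<times> 'a \<Rightarrow> 'a \<times> 'a" where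
  "aff_br m p q = (m (fst p) (fst q) - m (fst q) (fst p), m (fst p) (snd q) - m (fst q) (snd p))"

definition aff_J :: "'a::real_vector \<times> 'a \<Rightarrow> 'a \<times> 'a" where
  "aff_J p = (snd p, - fst p)"

definition central_ext_of_aff ::
  "'a::real_vector set \<Rightarrow> ('a \<Rightarrow> 'a \<Rightarrow> 'a) \<Rightarrow> ('a \<Rightarrow> 'a) \<Rightarrow> 'b::real_vector set \<Rightarrow> ('b \<Rightarrow> 'b \<Rightarrow> 'b) \<Rightarrow> bool" where
  "central_ext_of_aff H brH JH A m \<longleftrightarrow>
     JH ` center_on H brH \<subseteq> center_on H brH \<and>
     (\<exists>g. hol_quot_iso H (center_on H brH) brH JH (A \<times> A) (aff_br m) aff_J g)"

end

theory Submission
  imports Defs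
begin


lemma la_subspace: "lie_algebra_on S br \<Longrightarrow> subspace S"
  by (simp add: lie_algebra_on_def)
lemma la_closed: "lie_algebra_on S br \<Longrightarrow> x \<in> S \<Longrightarrow> y \<in> S \<Longrightarrow> br x y \<in> S"
  by (simp add: lie_algebra_on_def)
lemma la_addL: "lie_algebra_on S br \<Longrightarrow> x \<in> S \<Longrightarrow> y \<in> S \<Longrightarrow> z \<in> S \<Longrightarrow> br (x + y) z = br x z + br y z"
  by (simp add: lie_algebra_on_def bilinear_on_def)
lemma la_addR: "lie_algebra_on S br \<Longrightarrow> x \<in> S \<Longrightarrow> y \<in> S \<Longrightarrow> z \<in> S \<Longrightarrow> br x (y + z) = br x y + br x z"
  by (simp add: lie_algebra_on_def bilinear_on_def)
lemma la_scaleL: "lie_algebra_on S br \<Longrightarrow> x \<in> S \<Longrightarrow> y \<in> S \<Longrightarrow> br (c *\<^sub>R x) y = c *\<^sub>R br x y"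
  unfolding lie_algebra_on_def bilinear_on_def by metis
lemma la_scaleR: "lie_algebra_on S br \<Longrightarrow> x \<in> S \<Longrightarrow> y \<in> S \<Longrightarrow> br x (c *\<^sub>R y) = c *\<^sub>R br x y"
  unfolding lie_algebra_on_def bilinear_on_def by metis
lemma la_self: "lie_algebra_on S br \<Longrightarrow> x \<in> S \<Longrightarrow> br x x = 0"
  by (simp add: lie_algebra_on_def)
lemma la_jacobi: "lie_algebra_on S br \<Longrightarrow> x \<in> S \<Longrightarrow> y \<in> S \<Longrightarrow> z \<in> S \<Longrightarrow>
   br x (br y z) + br y (br z x) + br z (br x y) = 0"
  by (simp add: lie_algebra_on_def)
lemma la_zeroL: "lie_algebra_on S br \<Longrightarrow> y \<in> S \<Longrightarrow> br 0 y = 0"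
  using la_scaleL[of S br 0 y 0] la_subspace subspace_0 by fastforce
lemma la_zeroR: "lie_algebra_on S br \<Longrightarrow> y \<in> S \<Longrightarrow> br y 0 = 0"
  using la_scaleR[of S br y 0 0] la_subspace subspace_0 by fastforce
lemma la_negL: "lie_algebra_on S br \<Longrightarrow> x \<in> S \<Longrightarrow> y \<in> S \<Longrightarrow> br (- x) y = - br x y"
  using la_scaleL[of S br x y "-1"] by simp
lemma la_negR: "lie_algebra_on S br \<Longrightarrow> x \<in> S \<Longrightarrow> y \<in> S \<Longrightarrow> br x (- y) = - br x y"
  using la_scaleR[of S br x y "-1"] by simp
lemma la_diffL: "lie_algebra_on S br \<Longrightarrow> x \<in> S \<Longrightarrow> y \<in> S \<Longrightarrow> z \<in> S \<Longrightarrow> br (x - y) z = br x z - br y z"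
  using la_addL[of S br x "-y" z] la_negL[of S br y z] la_subspace subspace_neg by fastforce
lemma la_diffR: "lie_algebra_on S br \<Longrightarrow> x \<in> S \<Longrightarrow> y \<in> S \<Longrightarrow> z \<in> S \<Longrightarrow> br x (y - z) = br x y - br x z"
  using la_addR[of S br x y "-z"] la_negR[of S br x z] la_subspace subspace_neg by fastforce
lemma la_anti: "lie_algebra_on S br \<Longrightarrow> x \<in> S \<Longrightarrow> y \<in> S \<Longrightarrow> br x y = - br y x"
proof -
  assume L: "lie_algebra_on S br" and x: "x \<in> S" and y: "y \<in> S"
  have xy: "x + y \<in> S" using L x y la_subspace subspace_add by blast
  have "0 = br (x + y) (x + y)" using la_self[OF L xy] by simp
  also have "\<dots> = br x x + br x y + (br y x + br y y)"
    using L x y xy by (simp add: la_addL la_addR)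
  finally have "br x y + br y x = 0" using la_self[OF L x] la_self[OF L y] by simp
  then show ?thesis by (simp add: eq_neg_iff_add_eq_0)
qed

lemma cs_closed: "abelian_cs_on S br J \<Longrightarrow> x \<in> S \<Longrightarrow> J x \<in> S"
  by (simp add: abelian_cs_on_def)
lemma cs_add: "abelian_cs_on S br J \<Longrightarrow> x \<in> S \<Longrightarrow> y \<in> S \<Longrightarrow> J (x + y) = J x + J y"
  by (simp add: abelian_cs_on_def linear_on_def)
lemma cs_scale: "abelian_cs_on S br J \<Longrightarrow> x \<in> S \<Longrightarrow> J (c *\<^sub>R x) = c *\<^sub>R J x"
  by (simp add: abelian_cs_on_def linear_on_def)
lemma cs_JJ: "abelian_cs_on S br J \<Longrightarrow> x \<in> S \<Longrightarrow> J (J x) = - x"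
  by (simp add: abelian_cs_on_def)
lemma cs_JJbr: "abelian_cs_on S br J \<Longrightarrow> x \<in> S \<Longrightarrow> y \<in> S \<Longrightarrow> br (J x) (J y) = br x y"
  by (simp add: abelian_cs_on_def)
lemma cs_zero: "abelian_cs_on S br J \<Longrightarrow> subspace S \<Longrightarrow> J 0 = 0"
  using cs_scale[of S br J 0 0] subspace_0 by fastforce
lemma cs_neg: "abelian_cs_on S br J \<Longrightarrow> x \<in> S \<Longrightarrow> J (- x) = - J x"
  using cs_scale[of S br J x "-1"] by simp
lemma cs_diff: "abelian_cs_on S br J \<Longrightarrow> subspace S \<Longrightarrow> x \<in> S \<Longrightarrow> y \<in> S \<Longrightarrow> J (x - y) = J x - J y"
  using cs_add[of S br J x "-y"] cs_neg[of S br J y] subspace_neg by fastforce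
lemma cs_Jl: "lie_algebra_on S br \<Longrightarrow> abelian_cs_on S br J \<Longrightarrow> x \<in> S \<Longrightarrow> y \<in> S \<Longrightarrow>
   br (J x) y = - br x (J y)"
proof -
  assume L: "lie_algebra_on S br" and C: "abelian_cs_on S br J" and x: "x \<in> S" and y: "y \<in> S"
  have "br (J x) y = br (J (J x)) (J y)" using cs_JJbr[OF C, of "J x" y] cs_closed[OF C] x y by simp
  also have "\<dots> = br (- x) (J y)" using cs_JJ[OF C x] by simp
  also have "\<dots> = - br x (J y)" using la_negL[OF L x cs_closed[OF C y]] .
  finally show ?thesis .
qed



definition metab :: "'a::real_vector set \<Rightarrow> ('a \<Rightarrow> 'a \<Rightarrow> 'a) \<Rightarrow> bool" where
  "metab S br \<longleftrightarrow> (\<forall>a\<in>S. \<forall>b\<in>S. \<forall>c\<in>S. \<forall>d\<in>S. br (br a b) (br c d) = 0)"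

lemma quotient_exists:
  fixes S K :: "'a::euclidean_space set"
  assumes L: "lie_algebra_on S br" and C: "abelian_cs_on S br J"
    and I: "ideal_on S br K" and JK: "J ` K \<subseteq> K" and M: "metab S br"
    and nz: "K \<noteq> {0}"
  shows "\<exists>(Q::'a set) brQ JQ p. hol_quot_iso S K br J Q brQ JQ p \<and> lie_algebra_on Q brQ \<and>
           abelian_cs_on Q brQ JQ \<and> metab Q brQ \<and> dim Q < dim S"
proof -
  have SS: "subspace S" using L la_subspace by blast
  have KS: "K \<subseteq> S" and SK: "subspace K" and Kid: "\<And>x y. x \<in> S \<Longrightarrow> y \<in> K \<Longrightarrow> br x y \<in> K"
    using I by (auto simp: ideal_on_def)
  have "\<forall>x. \<exists>z. x - z \<in> K \<and> (\<forall>w\<in>K. z \<bullet> w = 0)"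
  proof
    fix x
    obtain y z where "y \<in> span K" "\<And>w. w \<in> span K \<Longrightarrow> orthogonal z w" "x = y + z"
      using orthogonal_subspace_decomp_exists[of K x] by metis
    then have "y \<in> K" "\<forall>w\<in>K. z \<bullet> w = 0" "x - z = y"
      using SK span_base by (auto simp: orthogonal_def span_eq_iff[THEN iffD2, OF SK])
    then show "\<exists>z. x - z \<in> K \<and> (\<forall>w\<in>K. z \<bullet> w = 0)" by metis
  qed
  then obtain p where pK: "\<And>x. x - p x \<in> K" and pO: "\<And>x w. w \<in> K \<Longrightarrow> p x \<bullet> w = 0"
    by metis
  have uniq: "p x = b" if "a \<in> K" "\<And>w. w \<in> K \<Longrightarrow> b \<bullet> w = 0" "x = a + b" for x a b
  proof -
    define u where "u = b - p x"
    have "u = (x - p x) - a" using that(3) by (simp add: u_def algebra_simps)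
    then have uK: "u \<in> K" using pK that(1) SK subspace_diff by metis
    have "u \<bullet> u = b \<bullet> u - p x \<bullet> u" by (simp add: u_def inner_diff_left)
    also have "\<dots> = 0" using that(2)[OF uK] pO[OF uK] by simp
    finally have "u = 0" by simp
    then show ?thesis by (simp add: u_def)
  qed
  have p_add: "p (x + y) = p x + p y" for x y
    by (rule uniq[of "(x - p x) + (y - p y)"]) (auto simp: pK SK subspace_add pO inner_add_left)
  have p_scale: "p (c *\<^sub>R x) = c *\<^sub>R p x" for c x
    by (rule uniq[of "c *\<^sub>R (x - p x)"]) (auto simp: pO, metis pK SK subspace_scale scaleR_diff_right, simp add: algebra_simps)
  have lin: "linear p" by (rule linearI) (auto simp: p_add p_scale)
  have p_K: "w \<in> K \<Longrightarrow> p w = 0" for w by (rule uniq[of w]) auto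
  have pz: "p 0 = 0" using p_K SK subspace_0 by blast
  have p_idem: "p (p x) = p x" for x by (rule uniq[of 0]) (auto simp: pO SK subspace_0)
  have p_S: "x \<in> S \<Longrightarrow> p x \<in> S" for x
    using pK[of x] KS SS subspace_diff[OF SS, of x "x - p x"] by auto
  have p_eq: "x - y \<in> K \<Longrightarrow> p x = p y" for x y
    using p_add[of y "x - y"] p_K[of "x - y"] by simp
  have p0: "x \<in> S \<Longrightarrow> p x = 0 \<longleftrightarrow> x \<in> K" for x
    using pK[of x] p_K by auto
  have p_br: "p (br x y) = p (br (p x) (p y))" if "x \<in> S" "y \<in> S" for x y
  proof (rule p_eq)
    have k: "x - p x \<in> K" "y - p y \<in> K" by (rule pK)+
    have kS: "x - p x \<in> S" "y - p y \<in> S" using k KS by auto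
    have e: "br x y - br (p x) (p y) = br (x - p x) y + br (p x) (y - p y)"
      using L that p_S by (simp add: la_diffL la_diffR)
    have "br (x - p x) y = - br y (x - p x)" using la_anti[OF L kS(1) that(2)] .
    then have 1: "br (x - p x) y \<in> K" using Kid[OF that(2) k(1)] SK subspace_neg by metis
    have 2: "br (p x) (y - p y) \<in> K" using Kid[OF p_S[OF that(1)] k(2)] .
    show "br x y - br (p x) (p y) \<in> K" unfolding e using 1 2 SK subspace_add by blast
  qed
  have p_J: "p (J x) = p (J (p x))" if "x \<in> S" for x
  proof (rule p_eq)
    have "J x - J (p x) = J (x - p x)" using cs_diff[OF C SS that p_S[OF that]] by simp
    then show "J x - J (p x) \<in> K" using JK pK by auto
  qed
  define Q where "Q = p ` S"
  define brQ where "brQ u v = p (br u v)" for u v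
  define JQ where "JQ u = p (J u)" for u
  have QS: "Q \<subseteq> S" using p_S Q_def by auto
  have pQ: "u \<in> Q \<Longrightarrow> p u = u" for u using p_idem Q_def by auto
  have SQ: "subspace Q" unfolding Q_def using lin SS linear_subspace_image by blast
  have inQ: "x \<in> S \<Longrightarrow> p x \<in> Q" for x by (simp add: Q_def)
  have brQ_p: "brQ u (brQ v w) = p (br u (br v w))" if "u \<in> Q" "v \<in> Q" "w \<in> Q" for u v w
  proof -
    have "brQ u (brQ v w) = p (br (p u) (p (br v w)))"
      using p_br[of u "p (br v w)"] that QS p_S la_closed[OF L] by (simp add: brQ_def subsetD p_idem)
    also have "\<dots> = p (br u (br v w))"
      using p_br[of u "br v w"] that QS la_closed[OF L] pQ by (simp add: subsetD)
    finally show ?thesis .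
  qed
  have iso: "hol_quot_iso S K br J Q brQ JQ p"
    unfolding hol_quot_iso_def linear_on_def
    using p_add p_scale p0 p_br p_J Q_def by (auto simp: brQ_def JQ_def)
  have LQ: "lie_algebra_on Q brQ"
    unfolding lie_algebra_on_def
  proof (intro conjI ballI allI)
    show "subspace Q" by (rule SQ)
    show "bilinear_on Q brQ"
      unfolding bilinear_on_def brQ_def
      using QS SS L by (auto simp: la_addL la_addR la_scaleL la_scaleR p_add p_scale subsetD
          subspace_add subspace_scale)
    fix x y z assume x: "x \<in> Q" and y: "y \<in> Q" and z: "z \<in> Q"
    show "brQ x y \<in> Q" using x y QS inQ la_closed[OF L, of x y] by (auto simp: brQ_def)
    show "brQ x x = 0" using x QS la_self[OF L, of x] pz by (auto simp: brQ_def)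
    show "brQ x (brQ y z) + brQ y (brQ z x) + brQ z (brQ x y) = 0"
      using brQ_p[OF x y z] brQ_p[OF y z x] brQ_p[OF z x y] la_jacobi[OF L, of x y z] x y z QS
        p_add[symmetric] pz by (auto simp: subsetD)
  qed
  have CQ: "abelian_cs_on Q brQ JQ"
    unfolding abelian_cs_on_def linear_on_def
  proof (intro conjI ballI allI)
    fix x y assume x: "x \<in> Q" and y: "y \<in> Q"
    have xS: "x \<in> S" and yS: "y \<in> S" using x y QS by auto
    show "JQ x \<in> Q" using inQ cs_closed[OF C xS] by (simp add: JQ_def)
    show "JQ (x + y) = JQ x + JQ y" using cs_add[OF C xS yS] p_add by (simp add: JQ_def)
    show "JQ (c *\<^sub>R x) = c *\<^sub>R JQ x" for c using cs_scale[OF C xS] p_scale by (simp add: JQ_def)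
    show "JQ (JQ x) = - x"
      using p_J[OF cs_closed[OF C xS]] cs_JJ[OF C xS] pQ[OF x] p_scale[of "-1" x]
      by (simp add: JQ_def)
    show "brQ (JQ x) (JQ y) = brQ x y"
      using p_br[OF cs_closed[OF C xS] cs_closed[OF C yS]] cs_JJbr[OF C xS yS]
      by (simp add: JQ_def brQ_def)
  qed
  have MQ: "metab Q brQ"
    unfolding metab_def
  proof (intro ballI)
    fix a b c d assume a: "a \<in> Q" and b: "b \<in> Q" and c: "c \<in> Q" and d: "d \<in> Q"
    have aS: "a \<in> S" "b \<in> S" "c \<in> S" "d \<in> S" using a b c d QS by auto
    have "brQ (brQ a b) (brQ c d) = p (br (br a b) (br c d))"
      using p_br[of "br a b" "br c d"] aS la_closed[OF L] by (simp add: brQ_def)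
    also have "\<dots> = 0" using M aS pz by (simp add: metab_def)
    finally show "brQ (brQ a b) (brQ c d) = 0" .
  qed
  have "Q \<noteq> S"
  proof
    assume QeS: "Q = S"
    obtain k where k: "k \<in> K" "k \<noteq> 0" using nz SK subspace_0 by blast
    then have "k \<in> Q" using KS QeS by auto
    then obtain y where "k = p y" using Q_def by auto
    then have "k \<bullet> k = 0" using pO[OF k(1)] by simp
    then show False using k by simp
  qed
  then have "span Q \<subset> span S" using QS SQ SS by (simp add: span_eq_iff[THEN iffD2] psubset_eq)
  then have "dim Q < dim S" by (rule dim_psubset)
  then show ?thesis using iso LQ CQ MQ
    by (intro exI[of _ Q] exI[of _ brQ] exI[of _ JQ] exI[of _ p]) simp
qed



lemma restrict_lie:
  assumes L: "lie_algebra_on S br" and C: "abelian_cs_on S br J"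
    and I: "ideal_on S br K" and JK: "J ` K \<subseteq> K"
  shows "lie_algebra_on K br \<and> abelian_cs_on K br J"
proof -
  have KS: "K \<subseteq> S" and SK: "subspace K" and Kid: "\<And>x y. x \<in> S \<Longrightarrow> y \<in> K \<Longrightarrow> br x y \<in> K"
    using I by (auto simp: ideal_on_def)
  have m: "x \<in> K \<Longrightarrow> x \<in> S" for x using KS by auto
  have "lie_algebra_on K br"
    unfolding lie_algebra_on_def bilinear_on_def
  proof (intro conjI ballI allI)
    show "subspace K" by (rule SK)
    fix x y z c assume x: "x \<in> K" and y: "y \<in> K" and z: "z \<in> K"
    show "br (x + y) z = br x z + br y z" by (rule la_addL[OF L m[OF x] m[OF y] m[OF z]])
    show "br x (y + z) = br x y + br x z" by (rule la_addR[OF L m[OF x] m[OF y] m[OF z]])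
    show "br (c *\<^sub>R x) y = c *\<^sub>R br x y" by (rule la_scaleL[OF L m[OF x] m[OF y]])
    show "br x (c *\<^sub>R y) = c *\<^sub>R br x y" by (rule la_scaleR[OF L m[OF x] m[OF y]])
    show "br x y \<in> K" by (rule Kid[OF m[OF x] y])
    show "br x x = 0" by (rule la_self[OF L m[OF x]])
    show "br x (br y z) + br y (br z x) + br z (br x y) = 0" by (rule la_jacobi[OF L m[OF x] m[OF y] m[OF z]])
  qed
  moreover have "abelian_cs_on K br J"
    unfolding abelian_cs_on_def linear_on_def
  proof (intro conjI ballI allI)
    fix x y c assume x: "x \<in> K" and y: "y \<in> K"
    show "J x \<in> K" using JK x by auto
    show "J (x + y) = J x + J y" by (rule cs_add[OF C m[OF x] m[OF y]])
    show "J (c *\<^sub>R x) = c *\<^sub>R J x" by (rule cs_scale[OF C m[OF x]])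
    show "J (J x) = - x" by (rule cs_JJ[OF C m[OF x]])
    show "br (J x) (J y) = br x y" by (rule cs_JJbr[OF C m[OF x] m[OF y]])
  qed
  ultimately show ?thesis by simp
qed

lemma abel_ext:
  fixes K :: "'a::real_vector set"
  assumes SK: "subspace K" and JK: "J ` K \<subseteq> K" and ab: "\<And>x y. x \<in> K \<Longrightarrow> y \<in> K \<Longrightarrow> br x y = 0"
  shows "comm_assoc_alg_on {0::'a} (\<lambda>_ _. 0) \<and> central_ext_of_aff K br J {0::'a} (\<lambda>_ _. 0)"
proof -
  have cen: "center_on K br = K" using ab by (auto simp: center_on_def)
  have ne: "K \<noteq> {}" using SK subspace_0 by blast
  have "hol_quot_iso K K br J ({0::'a} \<times> {0::'a}) (aff_br (\<lambda>_ _. 0)) aff_J (\<lambda>_. (0, 0))"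
    unfolding hol_quot_iso_def linear_on_def using ne
    by (auto simp: aff_br_def aff_J_def zero_prod_def)
  then show ?thesis
    unfolding comm_assoc_alg_on_def central_ext_of_aff_def bilinear_on_def cen using JK
    by auto
qed



lemma step_ideal:
  fixes S :: "'a::real_vector set"
  assumes L: "lie_algebra_on S br" and C: "abelian_cs_on S br J" and M: "metab S br"
    and nz: "S \<noteq> {0}"
  shows "\<exists>K. K \<noteq> {0} \<and> ideal_on S br K \<and> J ` K \<subseteq> K \<and>
           (\<exists>(A::'a set) m. comm_assoc_alg_on A m \<and> central_ext_of_aff K br J A m)"
proof -
  have SS: "subspace S" using L la_subspace by blast
  have J0: "J 0 = 0" using cs_zero[OF C SS] .
  have JS: "x \<in> S \<Longrightarrow> J x \<in> S" for x using cs_closed[OF C] .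
  have brS: "x \<in> S \<Longrightarrow> y \<in> S \<Longrightarrow> br x y \<in> S" for x y using la_closed[OF L] .
  show ?thesis
  proof (cases "\<forall>x\<in>S. \<forall>y\<in>S. br x y = 0")
    case True
    have "ideal_on S br S" using SS brS by (simp add: ideal_on_def)
    moreover have "J ` S \<subseteq> S" using JS by auto
    moreover have "comm_assoc_alg_on {0::'a} (\<lambda>_ _. 0) \<and> central_ext_of_aff S br J {0::'a} (\<lambda>_ _. 0)"
      using abel_ext[OF SS \<open>J ` S \<subseteq> S\<close>] True by blast
    ultimately show ?thesis using nz by blast
  next
    case False
    then obtain x0 y0 where xy0: "x0 \<in> S" "y0 \<in> S" "br x0 y0 \<noteq> 0" by blast
    define G where "G = {br x y | x y. x \<in> S \<and> y \<in> S}"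
    define D where "D = span G"
    have GS: "G \<subseteq> S" using brS by (auto simp: G_def)
    have DS: "D \<subseteq> S" unfolding D_def using span_minimal[OF GS SS] .
    have SD: "subspace D" unfolding D_def by simp
    have mD: "d \<in> D \<Longrightarrow> d \<in> S" for d using DS by auto
    have brD: "x \<in> S \<Longrightarrow> y \<in> S \<Longrightarrow> br x y \<in> D" for x y
      unfolding D_def G_def by (rule span_base) blast
    have abG: "br g v = 0" if g: "g \<in> G" and v: "v \<in> D" for g v
    proof -
      have "v \<in> S \<and> br g v = 0" using v[unfolded D_def]
      proof (induction rule: span_induct_alt)
        case base then show ?case using SS subspace_0 la_zeroR[OF L] g GS by blast
      next
        case (step c x y)
        have xS: "x \<in> S" using step GS by auto
        have gS: "g \<in> S" using g GS by auto
        obtain a b where ab: "g = br a b" "a \<in> S" "b \<in> S" using g G_def by auto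
        obtain a' b' where ab': "x = br a' b'" "a' \<in> S" "b' \<in> S" using step G_def by auto
        have "br g x = 0" using M ab ab' by (simp add: metab_def)
        then show ?case using step xS gS SS
          by (simp add: la_addR[OF L] la_scaleR[OF L] subspace_add subspace_scale)
      qed
      then show ?thesis by simp
    qed
    have abD: "br u v = 0" if u: "u \<in> D" and v: "v \<in> D" for u v
    proof -
      have vS: "v \<in> S" using v mD by simp
      have "u \<in> S \<and> br u v = 0" using u[unfolded D_def]
      proof (induction rule: span_induct_alt)
        case base then show ?case using SS subspace_0 la_zeroL[OF L vS] by blast
      next
        case (step c x y)
        have xS: "x \<in> S" using step GS by auto
        have "br x v = 0" using abG[OF step(1) v] .
        then show ?case using step xS vS SS
          by (simp add: la_addL[OF L] la_scaleL[OF L] subspace_add subspace_scale)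
      qed
      then show ?thesis by simp
    qed
    define K0 where "K0 = {d1 + J d2 | d1 d2. d1 \<in> D \<and> d2 \<in> D}"
    have K0E: "\<exists>d1 d2. d1 \<in> D \<and> d2 \<in> D \<and> k = d1 + J d2" if "k \<in> K0" for k
      using that K0_def by auto
    have K0I: "d1 \<in> D \<Longrightarrow> d2 \<in> D \<Longrightarrow> d1 + J d2 \<in> K0" for d1 d2
      using K0_def by auto
    have DK0: "d \<in> D \<Longrightarrow> d \<in> K0" for d using K0I[of d 0] SD subspace_0 J0 by auto
    have K0S: "K0 \<subseteq> S"
      unfolding K0_def using mD JS SS subspace_add by blast
    have mK: "k \<in> K0 \<Longrightarrow> k \<in> S" for k using K0S by auto
    have SK0: "subspace K0"
      unfolding subspace_def
    proof (intro conjI ballI allI)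
      show "0 \<in> K0" using DK0 SD subspace_0 by blast
      fix x y c assume x: "x \<in> K0" and y: "y \<in> K0"
      obtain a b where ab: "a \<in> D" "b \<in> D" "x = a + J b" using K0E[OF x] by blast
      obtain a' b' where ab': "a' \<in> D" "b' \<in> D" "y = a' + J b'" using K0E[OF y] by blast
      have "x + y = (a + a') + J (b + b')" using ab ab' cs_add[OF C mD mD] by (simp add: algebra_simps)
      then show "x + y \<in> K0" using K0I ab ab' SD subspace_add by metis
      have "c *\<^sub>R x = c *\<^sub>R a + J (c *\<^sub>R b)" using ab cs_scale[OF C mD] by (simp add: scaleR_add_right)
      then show "c *\<^sub>R x \<in> K0" using K0I ab SD subspace_scale by metis
    qed
    have K0id: "br x k \<in> K0" if x: "x \<in> S" and k: "k \<in> K0" for x k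
    proof -
      obtain a b where ab: "a \<in> D" "b \<in> D" "k = a + J b" using K0E[OF k] by blast
      have "br x k = br x a + br x (J b)" using ab la_addR[OF L x mD JS[OF mD]] by simp
      also have "br x (J b) = - br (J x) b" using cs_Jl[OF L C x mD[OF ab(2)]] by simp
      finally have "br x k = (br x a - br (J x) b) + J 0" using J0 by simp
      moreover have "br x a - br (J x) b \<in> D"
        using brD[OF x mD[OF ab(1)]] brD[OF JS[OF x] mD[OF ab(2)]] SD subspace_diff by blast
      ultimately show ?thesis using K0I SD subspace_0 by metis
    qed
    have K0J: "J k \<in> K0" if k: "k \<in> K0" for k
    proof -
      obtain a b where ab: "a \<in> D" "b \<in> D" "k = a + J b" using K0E[OF k] by blast
      have "J k = (- b) + J a" using ab cs_add[OF C mD JS[OF mD]] cs_JJ[OF C mD[OF ab(2)]] by simp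
      then show ?thesis using K0I ab SD subspace_neg by metis
    qed
    define Z where "Z = center_on K0 br"
    have ZE: "z \<in> Z \<longleftrightarrow> z \<in> K0 \<and> (\<forall>y\<in>K0. br z y = 0)" for z by (simp add: Z_def center_on_def)
    show ?thesis
    proof (cases "Z = {0}")
      case False
      have SZ: "subspace Z"
        unfolding subspace_def
      proof (intro conjI ballI allI)
        show "0 \<in> Z" using ZE SK0 subspace_0 la_zeroL[OF L] mK by blast
        fix x y c assume x: "x \<in> Z" and y: "y \<in> Z"
        have xK: "x \<in> K0" and yK: "y \<in> K0" using x y ZE by auto
        show "x + y \<in> Z" using x y subspace_add[OF SK0 xK yK] la_addL[OF L mK[OF xK] mK[OF yK] mK]
          by (simp add: ZE)
        show "c *\<^sub>R x \<in> Z" using x subspace_scale[OF SK0 xK] la_scaleL[OF L mK[OF xK] mK]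
          by (simp add: ZE)
      qed
      have ZS: "Z \<subseteq> S" using ZE mK by auto
      have Zid: "br x z \<in> Z" if x: "x \<in> S" and z: "z \<in> Z" for x z
      proof -
        have zK: "z \<in> K0" and zc: "\<And>y. y \<in> K0 \<Longrightarrow> br z y = 0" using z ZE by auto
        have "br (br x z) k = 0" if k: "k \<in> K0" for k
        proof -
          have kS: "k \<in> S" using mK k .
          have zS: "z \<in> S" using mK zK .
          have j: "br k (br x z) + br x (br z k) + br z (br k x) = 0" using la_jacobi[OF L kS x zS] .
          have "br k x \<in> K0" using K0id[OF x k] la_anti[OF L kS x] SK0 subspace_neg by metis
          then have "br z (br k x) = 0" using zc by blast
          moreover have "br z k = 0" using zc k by blast
          ultimately have "br k (br x z) = 0" using j la_zeroR[OF L x] by simp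
          then show ?thesis using la_anti[OF L brS[OF x zS] kS] by simp
        qed
        then show ?thesis using ZE K0id[OF x zK] by blast
      qed
      have ZJ: "J z \<in> Z" if z: "z \<in> Z" for z
      proof -
        have zK: "z \<in> K0" and zc: "\<And>y. y \<in> K0 \<Longrightarrow> br z y = 0" using z ZE by auto
        have "br (J z) k = 0" if k: "k \<in> K0" for k
          using cs_Jl[OF L C mK[OF zK] mK[OF k]] zc[OF K0J[OF k]] by simp
        then show ?thesis using ZE K0J[OF zK] by blast
      qed
      have "ideal_on S br Z" using SZ ZS Zid by (simp add: ideal_on_def)
      moreover have "J ` Z \<subseteq> Z" using ZJ by auto
      moreover have "comm_assoc_alg_on {0::'a} (\<lambda>_ _. 0) \<and> central_ext_of_aff Z br J {0::'a} (\<lambda>_ _. 0)"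
        using abel_ext[OF SZ \<open>J ` Z \<subseteq> Z\<close>] ZE by blast
      ultimately show ?thesis using False by blast
    next
      case True
      note Z0 = True
      have zc: "k = 0" if "k \<in> K0" "\<And>y. y \<in> K0 \<Longrightarrow> br k y = 0" for k
        using that ZE Z0 by blast
      have uniq: "v = v' \<and> w = w'" if v: "v \<in> D" "w \<in> D" "v' \<in> D" "w' \<in> D"
        and e: "v + J w = v' + J w'" for v w v' w'
      proof -
        define u where "u = v - v'"
        define t where "t = w' - w"
        have uD: "u \<in> D" and tD: "t \<in> D" using v SD subspace_diff by (auto simp: u_def t_def)
        have "v - v' = (v + J w) - (v' + J w)" by simp
        also have "\<dots> = (v' + J w') - (v' + J w)" using e by simp
        also have "\<dots> = J w' - J w" by simp
        finally have ut: "u = J t" using cs_diff[OF C SS mD[OF v(4)] mD[OF v(2)]]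
          by (simp add: u_def t_def)
        have "u = 0"
        proof (rule zc)
          show "u \<in> K0" using DK0 uD by blast
          fix y assume y: "y \<in> K0"
          obtain a b where ab: "a \<in> D" "b \<in> D" "y = a + J b" using K0E[OF y] by blast
          have "br u y = br u a + br u (J b)" using ab la_addR[OF L mD[OF uD] mD JS[OF mD]] by simp
          also have "br u a = 0" using abD uD ab by blast
          also have "br u (J b) = - br (J u) b" using cs_Jl[OF L C mD[OF uD] mD[OF ab(2)]] by simp
          also have "J u = - t" using ut cs_JJ[OF C mD[OF tD]] by simp
          also have "br (- t) b = - br t b" using la_negL[OF L mD[OF tD] mD[OF ab(2)]] .
          also have "br t b = 0" using abD tD ab by blast
          finally show "br u y = 0" by simp
        qed
        then have "J t = 0" using ut by simp
        then have "t = 0" using cs_JJ[OF C mD[OF tD]] J0 by (metis minus_equation_iff minus_zero)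
        then show ?thesis using \<open>u = 0\<close> by (simp add: u_def t_def)
      qed
      define g where "g k = (SOME p. snd p \<in> D \<and> fst p \<in> D \<and> k = snd p + J (fst p))" for k
      have gval: "g (v + J w) = (w, v)" if "v \<in> D" "w \<in> D" for v w
      proof -
        have ex: "\<exists>p. snd p \<in> D \<and> fst p \<in> D \<and> v + J w = snd p + J (fst p)"
          using that by (intro exI[of _ "(w, v)"]) simp
        have "snd (g (v + J w)) \<in> D \<and> fst (g (v + J w)) \<in> D \<and> v + J w = snd (g (v + J w)) + J (fst (g (v + J w)))"
          unfolding g_def by (rule someI_ex[OF ex])
        then show ?thesis using uniq[of v w "snd (g (v + J w))" "fst (g (v + J w))"] that
          by (metis prod.collapse)
      qed
      define m where "m a b = br (J a) b" for a b
      have mcomm: "m a b = m b a" if "a \<in> D" "b \<in> D" for a b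
        using cs_Jl[OF L C mD[OF that(1)] mD[OF that(2)]] la_anti[OF L mD[OF that(1)] JS[OF mD[OF that(2)]]]
        by (simp add: m_def)
      have mD': "m a b \<in> D" if "a \<in> D" "b \<in> D" for a b
        using brD[OF JS[OF mD[OF that(1)]] mD[OF that(2)]] by (simp add: m_def)
      have mswap: "m a (m b c) = m b (m a c)" if D3: "a \<in> D" "b \<in> D" "c \<in> D" for a b c
      proof -
        have aS: "J a \<in> S" and bS: "J b \<in> S" and cS: "c \<in> S" using D3 mD JS by auto
        have j: "br (J a) (br (J b) c) + br (J b) (br c (J a)) + br c (br (J a) (J b)) = 0"
          using la_jacobi[OF L aS bS cS] .
        have "br (J a) (J b) = 0" using cs_JJbr[OF C mD[OF D3(1)] mD[OF D3(2)]] abD D3 by simp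
        then have "br c (br (J a) (J b)) = 0" using la_zeroR[OF L cS] by simp
        moreover have "br (J b) (br c (J a)) = - br (J b) (br (J a) c)"
          using la_anti[OF L cS aS] la_negR[OF L bS brS[OF aS cS]] by simp
        ultimately show ?thesis using j by (simp add: m_def)
      qed
      have massoc: "m (m a b) c = m a (m b c)" if D3: "a \<in> D" "b \<in> D" "c \<in> D" for a b c
      proof -
        have "m (m a b) c = m c (m a b)" using mcomm mD' D3 by simp
        also have "\<dots> = m a (m c b)" using mswap D3 by simp
        also have "\<dots> = m a (m b c)" using mcomm D3 by simp
        finally show ?thesis .
      qed
      have CA: "comm_assoc_alg_on D m"
        unfolding comm_assoc_alg_on_def bilinear_on_def
      proof (intro conjI ballI allI)
        show "subspace D" by (rule SD)
        fix x y z c assume x: "x \<in> D" and y: "y \<in> D" and z: "z \<in> D"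
        have xS: "x \<in> S" "y \<in> S" "z \<in> S" using x y z mD by auto
        show "m (x + y) z = m x z + m y z"
          using cs_add[OF C xS(1,2)] la_addL[OF L JS[OF xS(1)] JS[OF xS(2)] xS(3)] by (simp add: m_def)
        show "m x (y + z) = m x y + m x z"
          using la_addR[OF L JS[OF xS(1)] xS(2,3)] by (simp add: m_def)
        show "m (c *\<^sub>R x) y = c *\<^sub>R m x y"
          using cs_scale[OF C xS(1)] la_scaleL[OF L JS[OF xS(1)] xS(2)] by (simp add: m_def)
        show "m x (c *\<^sub>R y) = c *\<^sub>R m x y"
          using la_scaleR[OF L JS[OF xS(1)] xS(2)] by (simp add: m_def)
        show "m x y \<in> D" using mD' x y .
        show "m (m x y) z = m x (m y z)" using massoc x y z .
        show "m x y = m y x" using mcomm x y .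
      qed
      have cen: "center_on K0 br = {0}" using Z0 Z_def by simp
      have iso: "hol_quot_iso K0 {0} br J (D \<times> D) (aff_br m) aff_J g"
        unfolding hol_quot_iso_def linear_on_def
      proof (intro conjI ballI allI)
        fix x y c assume x: "x \<in> K0" and y: "y \<in> K0"
        obtain a b where ab: "a \<in> D" "b \<in> D" "x = a + J b" using K0E[OF x] by blast
        obtain a' b' where ab': "a' \<in> D" "b' \<in> D" "y = a' + J b'" using K0E[OF y] by blast
        have xy: "x + y = (a + a') + J (b + b')" using ab ab' cs_add[OF C mD mD] by (simp add: algebra_simps)
        have "g (x + y) = (b + b', a + a')"
          unfolding xy using gval[of "a + a'" "b + b'"] ab(1,2) ab'(1,2) subspace_add[OF SD] by simp
        then show "g (x + y) = g x + g y"
          using ab ab' gval by simp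
        have cx: "c *\<^sub>R x = c *\<^sub>R a + J (c *\<^sub>R b)" using ab cs_scale[OF C mD] by (simp add: scaleR_add_right)
        have "g (c *\<^sub>R x) = (c *\<^sub>R b, c *\<^sub>R a)"
          unfolding cx using gval[of "c *\<^sub>R a" "c *\<^sub>R b"] ab(1,2) subspace_scale[OF SD] by simp
        then show "g (c *\<^sub>R x) = c *\<^sub>R g x"
          using ab gval by simp
        show "g x = 0 \<longleftrightarrow> x \<in> {0}"
        proof
          assume "g x = 0" then have "a = 0" "b = 0" using ab gval by (auto simp: zero_prod_def)
          then show "x \<in> {0}" using ab J0 by simp
        next
          assume "x \<in> {0}" then have "a + J b = 0 + J 0" using ab J0 by simp
          then have "a = 0 \<and> b = 0" using uniq[of a b 0 0] ab SD subspace_0 by blast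
          then show "g x = 0" using ab gval[of a b] by (simp add: zero_prod_def)
        qed
        have aS: "a \<in> S" "b \<in> S" "a' \<in> S" "b' \<in> S" using ab ab' mD by auto
        have "br x y = br a a' + br a (J b') + (br (J b) a' + br (J b) (J b'))"
          using ab ab' aS JS by (simp add: la_addL[OF L] la_addR[OF L] brS subspace_add SS)
        also have "br a a' = 0" using abD ab ab' by blast
        also have "br (J b) (J b') = 0" using cs_JJbr[OF C aS(2,4)] abD ab ab' by simp
        finally have bxy: "br x y = (br a (J b') + br (J b) a') + J 0" using J0 by simp
        have inD: "br a (J b') + br (J b) a' \<in> D"
          using brD[OF aS(1) JS[OF aS(4)]] brD[OF JS[OF aS(2)] aS(3)] SD subspace_add by blast
        have "g (br x y) = (0, br a (J b') + br (J b) a')"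
          unfolding bxy by (rule gval[OF inD subspace_0[OF SD]])
        moreover have "aff_br m (g x) (g y) = (0, br a (J b') + br (J b) a')"
          using ab ab' gval mcomm la_anti[OF L aS(1) JS[OF aS(4)]]
          by (simp add: aff_br_def m_def)
        ultimately show "g (br x y) = aff_br m (g x) (g y)" by simp
        have Jx: "J x = (- b) + J a" using ab cs_add[OF C mD JS[OF mD]] cs_JJ[OF C aS(2)] by simp
        have "g (J x) = (a, - b)" unfolding Jx by (rule gval[OF subspace_neg[OF SD ab(2)] ab(1)])
        then show "g (J x) = aff_J (g x)" using ab gval by (simp add: aff_J_def)
      next
        show "g ` K0 = D \<times> D"
        proof
          show "g ` K0 \<subseteq> D \<times> D"
          proof
            fix p assume "p \<in> g ` K0"
            then obtain k where k: "k \<in> K0" "p = g k" by blast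
            obtain a b where ab: "a \<in> D" "b \<in> D" "k = a + J b" using K0E[OF k(1)] by blast
            show "p \<in> D \<times> D" using k ab gval by simp
          qed
          show "D \<times> D \<subseteq> g ` K0"
          proof
            fix p assume "p \<in> D \<times> D"
            then have "p = g (snd p + J (fst p))" "snd p + J (fst p) \<in> K0" using gval K0I by auto
            then show "p \<in> g ` K0" by blast
          qed
        qed
      qed
      have "central_ext_of_aff K0 br J D m"
        unfolding central_ext_of_aff_def cen using J0 iso by auto
      moreover have "K0 \<noteq> {0}" using DK0 brD[OF xy0(1,2)] xy0(3) by blast
      moreover have "ideal_on S br K0" using SK0 K0S K0id by (simp add: ideal_on_def)
      moreover have "J ` K0 \<subseteq> K0" using K0J by auto
      ultimately show ?thesis using CA by blast
    qed
  qed
qed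



lemma metabelian_core:
  fixes br :: "'a::real_vector \<Rightarrow> 'a \<Rightarrow> 'a" and J :: "'a \<Rightarrow> 'a"
  assumes badd1: "\<And>a b c. br (a + b) c = br a c + br b c"
    and badd2: "\<And>a b c. br a (b + c) = br a b + br a c"
    and antisym: "\<And>a b. br a b = - br b a"
    and Jadd: "\<And>a b. J (a + b) = J a + J b"
    and JJ: "\<And>a. J (J a) = - a"
    and JJbr: "\<And>a b. br (J a) (J b) = br a b"
    and jac: "\<And>a b c. br a (br b c) + br b (br c a) + br c (br a b) = 0"
  shows "br (br w z) (br x y) = 0"
proof -
  have b01: "\<And>b. br 0 b = 0" using badd1[of 0 0] by simp
  have b02: "\<And>b. br b 0 = 0" using badd2[of _ 0 0] by simp
  have bneg1: "\<And>a b. br (- a) b = - br a b"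
  proof -
    fix a b
    have "br (- a) b + br a b = 0" using badd1[of "- a" a b] b01 by simp
    then show "br (- a) b = - br a b" by (simp add: eq_neg_iff_add_eq_0)
  qed
  have bneg2: "\<And>a b. br a (- b) = - br a b"
  proof -
    fix a b
    have "br a (- b) + br a b = 0" using badd2[of a "- b" b] b02 by simp
    then show "br a (- b) = - br a b" by (simp add: eq_neg_iff_add_eq_0)
  qed
  have J0: "J 0 = 0" using Jadd[of 0 0] by simp
  have Jneg: "\<And>a. J (- a) = - J a"
  proof -
    fix a
    have "J (- a) + J a = 0" using Jadd[of "- a" a] J0 by simp
    then show "J (- a) = - J a" by (simp add: eq_neg_iff_add_eq_0)
  qed
  have Jl: "\<And>a b. br (J a) b = - br a (J b)"
  proof -
    fix a b
    have "br (J a) b = br (J (J a)) (J b)" using JJbr[of "J a" b] by simp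
    also have "\<dots> = - br a (J b)" using JJ[of a] bneg1[of a "J b"] by simp
    finally show "br (J a) b = - br a (J b)" .
  qed
  have anti2: "\<And>a b. br a (J b) = br b (J a)"
  proof -
    fix a b
    have "br a (J b) = - br (J b) a" by (rule antisym)
    also have "\<dots> = br b (J a)" using Jl[of b a] by simp
    finally show "br a (J b) = br b (J a)" .
  qed
  have bdiff1: "\<And>a b c. br (a - b) c = br a c - br b c"
    by (simp only: diff_conv_add_uminus badd1 bneg1)
  have bdiff2: "\<And>a b c. br a (b - c) = br a b - br a c"
    by (simp only: diff_conv_add_uminus badd2 bneg2)
  have Jdiff: "\<And>a b. J (a - b) = J a - J b"
    by (simp only: diff_conv_add_uminus Jadd Jneg)
  note norm = bdiff1 bdiff2 Jdiff badd1 badd2 bneg1 bneg2 b01 b02 J0 Jneg Jadd JJ JJbr Jl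
  have anti: "br (br (x) (y)) (br (w) (z)) = - br (br (w) (z)) (br (x) (y))"
    "br (br (x) (y)) (J (br (w) (z))) = br (br (w) (z)) (J (br (x) (y)))"
    "br (br (x) (y)) (br (w) (J (z))) = - br (br (w) (J (z))) (br (x) (y))"
    "br (br (x) (y)) (J (br (w) (J (z)))) = br (br (w) (J (z))) (J (br (x) (y)))"
    "br (br (x) (z)) (br (w) (y)) = - br (br (w) (y)) (br (x) (z))"
    "br (br (x) (z)) (J (br (w) (y))) = br (br (w) (y)) (J (br (x) (z)))"
    "br (br (x) (z)) (br (w) (J (y))) = - br (br (w) (J (y))) (br (x) (z))"
    "br (br (x) (z)) (J (br (w) (J (y)))) = br (br (w) (J (y))) (J (br (x) (z)))"
    "br (br (x) (J (z))) (br (w) (y)) = - br (br (w) (y)) (br (x) (J (z)))"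
    "br (br (x) (J (z))) (J (br (w) (y))) = br (br (w) (y)) (J (br (x) (J (z))))"
    "br (br (x) (J (z))) (br (w) (J (y))) = - br (br (w) (J (y))) (br (x) (J (z)))"
    "br (br (x) (J (z))) (J (br (w) (J (y)))) = br (br (w) (J (y))) (J (br (x) (J (z))))"
    "br (br (y) (z)) (br (w) (x)) = - br (br (w) (x)) (br (y) (z))"
    "br (br (y) (z)) (J (br (w) (x))) = br (br (w) (x)) (J (br (y) (z)))"
    "br (br (y) (z)) (br (w) (J (x))) = - br (br (w) (J (x))) (br (y) (z))"
    "br (br (y) (z)) (J (br (w) (J (x)))) = br (br (w) (J (x))) (J (br (y) (z)))"
    "br (br (y) (J (z))) (br (w) (x)) = - br (br (w) (x)) (br (y) (J (z)))"
    "br (br (y) (J (z))) (J (br (w) (x))) = br (br (w) (x)) (J (br (y) (J (z))))"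
    "br (br (y) (J (z))) (br (w) (J (x))) = - br (br (w) (J (x))) (br (y) (J (z)))"
    "br (br (y) (J (z))) (J (br (w) (J (x)))) = br (br (w) (J (x))) (J (br (y) (J (z))))"
    "br (w) (br (br (x) (z)) (y)) = - br (br (br (x) (z)) (y)) (w)"
    "br (w) (J (br (br (x) (z)) (y))) = br (br (br (x) (z)) (y)) (J (w))"
    "br (w) (br (br (x) (J (z))) (J (y))) = - br (br (br (x) (J (z))) (J (y))) (w)"
    "br (w) (J (br (br (x) (J (z))) (J (y)))) = br (br (br (x) (J (z))) (J (y))) (J (w))"
    "br (w) (br (br (y) (z)) (x)) = - br (br (br (y) (z)) (x)) (w)"
    "br (w) (J (br (br (y) (z)) (x))) = br (br (br (y) (z)) (x)) (J (w))"
    "br (w) (br (br (y) (J (z))) (J (x))) = - br (br (br (y) (J (z))) (J (x))) (w)"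
    "br (w) (J (br (br (y) (J (z))) (J (x)))) = br (br (br (y) (J (z))) (J (x))) (J (w))"
    "br (w) (br (x) (y)) = - br (br (x) (y)) (w)"
    "br (w) (J (br (x) (y))) = br (br (x) (y)) (J (w))"
    "br (w) (br (x) (z)) = - br (br (x) (z)) (w)"
    "br (w) (J (br (x) (z))) = br (br (x) (z)) (J (w))"
    "br (w) (br (x) (J (z))) = - br (br (x) (J (z))) (w)"
    "br (w) (J (br (x) (J (z)))) = br (br (x) (J (z))) (J (w))"
    "br (w) (br (y) (z)) = - br (br (y) (z)) (w)"
    "br (w) (J (br (y) (z))) = br (br (y) (z)) (J (w))"
    "br (w) (br (y) (J (z))) = - br (br (y) (J (z))) (w)"
    "br (w) (J (br (y) (J (z)))) = br (br (y) (J (z))) (J (w))"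
    "br (x) (br (br (w) (y)) (z)) = - br (br (br (w) (y)) (z)) (x)"
    "br (x) (J (br (br (w) (y)) (z))) = br (br (br (w) (y)) (z)) (J (x))"
    "br (x) (br (br (w) (y)) (J (z))) = - br (br (br (w) (y)) (J (z))) (x)"
    "br (x) (J (br (br (w) (y)) (J (z)))) = br (br (br (w) (y)) (J (z))) (J (x))"
    "br (x) (br (br (w) (J (y))) (z)) = - br (br (br (w) (J (y))) (z)) (x)"
    "br (x) (J (br (br (w) (J (y))) (z))) = br (br (br (w) (J (y))) (z)) (J (x))"
    "br (x) (br (br (w) (J (y))) (J (z))) = - br (br (br (w) (J (y))) (J (z))) (x)"
    "br (x) (J (br (br (w) (J (y))) (J (z)))) = br (br (br (w) (J (y))) (J (z))) (J (x))"
    "br (x) (br (br (w) (z)) (y)) = - br (br (br (w) (z)) (y)) (x)"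
    "br (x) (J (br (br (w) (z)) (y))) = br (br (br (w) (z)) (y)) (J (x))"
    "br (x) (br (br (w) (z)) (J (y))) = - br (br (br (w) (z)) (J (y))) (x)"
    "br (x) (J (br (br (w) (z)) (J (y)))) = br (br (br (w) (z)) (J (y))) (J (x))"
    "br (x) (br (br (w) (J (z))) (y)) = - br (br (br (w) (J (z))) (y)) (x)"
    "br (x) (J (br (br (w) (J (z))) (y))) = br (br (br (w) (J (z))) (y)) (J (x))"
    "br (x) (br (br (y) (z)) (w)) = - br (br (br (y) (z)) (w)) (x)"
    "br (x) (J (br (br (y) (z)) (w))) = br (br (br (y) (z)) (w)) (J (x))"
    "br (x) (br (br (y) (z)) (J (w))) = - br (br (br (y) (z)) (J (w))) (x)"
    "br (x) (J (br (br (y) (z)) (J (w)))) = br (br (br (y) (z)) (J (w))) (J (x))"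
    "br (x) (br (br (y) (J (z))) (w)) = - br (br (br (y) (J (z))) (w)) (x)"
    "br (x) (J (br (br (y) (J (z))) (w))) = br (br (br (y) (J (z))) (w)) (J (x))"
    "br (x) (br (br (y) (J (z))) (J (w))) = - br (br (br (y) (J (z))) (J (w))) (x)"
    "br (x) (J (br (br (y) (J (z))) (J (w)))) = br (br (br (y) (J (z))) (J (w))) (J (x))"
    "br (x) (br (w) (y)) = - br (br (w) (y)) (x)"
    "br (x) (J (br (w) (y))) = br (br (w) (y)) (J (x))"
    "br (x) (br (w) (J (y))) = - br (br (w) (J (y))) (x)"
    "br (x) (J (br (w) (J (y)))) = br (br (w) (J (y))) (J (x))"
    "br (x) (br (w) (z)) = - br (br (w) (z)) (x)"
    "br (x) (J (br (w) (z))) = br (br (w) (z)) (J (x))"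
    "br (x) (br (w) (J (z))) = - br (br (w) (J (z))) (x)"
    "br (x) (J (br (w) (J (z)))) = br (br (w) (J (z))) (J (x))"
    "br (x) (br (y) (z)) = - br (br (y) (z)) (x)"
    "br (x) (J (br (y) (z))) = br (br (y) (z)) (J (x))"
    "br (x) (br (y) (J (z))) = - br (br (y) (J (z))) (x)"
    "br (x) (J (br (y) (J (z)))) = br (br (y) (J (z))) (J (x))"
    "br (x) (w) = - br (w) (x)"
    "br (x) (J (w)) = br (w) (J (x))"
    "br (y) (br (br (w) (x)) (z)) = - br (br (br (w) (x)) (z)) (y)"
    "br (y) (J (br (br (w) (x)) (z))) = br (br (br (w) (x)) (z)) (J (y))"
    "br (y) (br (br (w) (x)) (J (z))) = - br (br (br (w) (x)) (J (z))) (y)"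
    "br (y) (J (br (br (w) (x)) (J (z)))) = br (br (br (w) (x)) (J (z))) (J (y))"
    "br (y) (br (br (w) (J (x))) (z)) = - br (br (br (w) (J (x))) (z)) (y)"
    "br (y) (J (br (br (w) (J (x))) (z))) = br (br (br (w) (J (x))) (z)) (J (y))"
    "br (y) (br (br (w) (J (x))) (J (z))) = - br (br (br (w) (J (x))) (J (z))) (y)"
    "br (y) (J (br (br (w) (J (x))) (J (z)))) = br (br (br (w) (J (x))) (J (z))) (J (y))"
    "br (y) (br (br (w) (z)) (x)) = - br (br (br (w) (z)) (x)) (y)"
    "br (y) (J (br (br (w) (z)) (x))) = br (br (br (w) (z)) (x)) (J (y))"
    "br (y) (br (br (w) (z)) (J (x))) = - br (br (br (w) (z)) (J (x))) (y)"
    "br (y) (J (br (br (w) (z)) (J (x)))) = br (br (br (w) (z)) (J (x))) (J (y))"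
    "br (y) (br (br (w) (J (z))) (x)) = - br (br (br (w) (J (z))) (x)) (y)"
    "br (y) (J (br (br (w) (J (z))) (x))) = br (br (br (w) (J (z))) (x)) (J (y))"
    "br (y) (br (br (x) (z)) (w)) = - br (br (br (x) (z)) (w)) (y)"
    "br (y) (J (br (br (x) (z)) (w))) = br (br (br (x) (z)) (w)) (J (y))"
    "br (y) (br (br (x) (z)) (J (w))) = - br (br (br (x) (z)) (J (w))) (y)"
    "br (y) (J (br (br (x) (z)) (J (w)))) = br (br (br (x) (z)) (J (w))) (J (y))"
    "br (y) (br (br (x) (J (z))) (w)) = - br (br (br (x) (J (z))) (w)) (y)"
    "br (y) (J (br (br (x) (J (z))) (w))) = br (br (br (x) (J (z))) (w)) (J (y))"
    "br (y) (br (br (x) (J (z))) (J (w))) = - br (br (br (x) (J (z))) (J (w))) (y)"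
    "br (y) (J (br (br (x) (J (z))) (J (w)))) = br (br (br (x) (J (z))) (J (w))) (J (y))"
    "br (y) (br (w) (x)) = - br (br (w) (x)) (y)"
    "br (y) (J (br (w) (x))) = br (br (w) (x)) (J (y))"
    "br (y) (br (w) (J (x))) = - br (br (w) (J (x))) (y)"
    "br (y) (J (br (w) (J (x)))) = br (br (w) (J (x))) (J (y))"
    "br (y) (br (w) (z)) = - br (br (w) (z)) (y)"
    "br (y) (J (br (w) (z))) = br (br (w) (z)) (J (y))"
    "br (y) (br (w) (J (z))) = - br (br (w) (J (z))) (y)"
    "br (y) (J (br (w) (J (z)))) = br (br (w) (J (z))) (J (y))"
    "br (y) (br (x) (z)) = - br (br (x) (z)) (y)"
    "br (y) (J (br (x) (z))) = br (br (x) (z)) (J (y))"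
    "br (y) (br (x) (J (z))) = - br (br (x) (J (z))) (y)"
    "br (y) (J (br (x) (J (z)))) = br (br (x) (J (z))) (J (y))"
    "br (y) (w) = - br (w) (y)"
    "br (y) (J (w)) = br (w) (J (y))"
    "br (y) (x) = - br (x) (y)"
    "br (y) (J (x)) = br (x) (J (y))"
    "br (z) (br (br (w) (x)) (J (y))) = - br (br (br (w) (x)) (J (y))) (z)"
    "br (z) (J (br (br (w) (x)) (J (y)))) = br (br (br (w) (x)) (J (y))) (J (z))"
    "br (z) (br (br (w) (J (x))) (J (y))) = - br (br (br (w) (J (x))) (J (y))) (z)"
    "br (z) (J (br (br (w) (J (x))) (J (y)))) = br (br (br (w) (J (x))) (J (y))) (J (z))"
    "br (z) (br (br (w) (y)) (J (x))) = - br (br (br (w) (y)) (J (x))) (z)"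
    "br (z) (J (br (br (w) (y)) (J (x)))) = br (br (br (w) (y)) (J (x))) (J (z))"
    "br (z) (br (br (w) (J (y))) (J (x))) = - br (br (br (w) (J (y))) (J (x))) (z)"
    "br (z) (J (br (br (w) (J (y))) (J (x)))) = br (br (br (w) (J (y))) (J (x))) (J (z))"
    "br (z) (br (w) (x)) = - br (br (w) (x)) (z)"
    "br (z) (J (br (w) (x))) = br (br (w) (x)) (J (z))"
    "br (z) (br (w) (J (x))) = - br (br (w) (J (x))) (z)"
    "br (z) (J (br (w) (J (x)))) = br (br (w) (J (x))) (J (z))"
    "br (z) (br (w) (y)) = - br (br (w) (y)) (z)"
    "br (z) (J (br (w) (y))) = br (br (w) (y)) (J (z))"
    "br (z) (br (w) (J (y))) = - br (br (w) (J (y))) (z)"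
    "br (z) (J (br (w) (J (y)))) = br (br (w) (J (y))) (J (z))"
    "br (z) (br (x) (y)) = - br (br (x) (y)) (z)"
    "br (z) (J (br (x) (y))) = br (br (x) (y)) (J (z))"
    "br (z) (w) = - br (w) (z)"
    "br (z) (J (w)) = br (w) (J (z))"
    "br (z) (x) = - br (x) (z)"
    "br (z) (J (x)) = br (x) (J (z))"
    "br (z) (y) = - br (y) (z)"
    "br (z) (J (y)) = br (y) (J (z))"
    by (rule antisym anti2)+
  have r0: "br (br (J (w)) (br (y) (z)) + br (y) (br (z) (J (w))) + br (z) (br (J (w)) (y))) (J (x)) = 0"
    using jac[of "J (w)" "y" "z"] by (simp add: b01 b02 J0)
  have e0: "br (br (J (w)) (br (y) (z)) + br (y) (br (z) (J (w))) + br (z) (br (J (w)) (y))) (J (x)) = (br (br (br (w) (J (y))) (z)) (J (x))) - (br (br (br (w) (J (z))) (y)) (J (x))) - (br (br (br (y) (z)) (J (w))) (J (x)))"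
    by (simp add: anti norm algebra_simps)
  have n0: "(br (br (br (w) (J (y))) (z)) (J (x))) - (br (br (br (w) (J (z))) (y)) (J (x))) - (br (br (br (y) (z)) (J (w))) (J (x))) = 0"
    using r0 unfolding e0 .
  have r1: "br (w) (br (J (x)) (J (br (y) (z)))) + br (J (x)) (br (J (br (y) (z))) (w)) + br (J (br (y) (z))) (br (w) (J (x))) = 0"
    using jac[of "w" "J (x)" "J (br (y) (z))"] by (simp add: b01 b02 J0)
  have e1: "br (w) (br (J (x)) (J (br (y) (z)))) + br (J (x)) (br (J (br (y) (z))) (w)) + br (J (br (y) (z))) (br (w) (J (x))) = (br (br (br (y) (z)) (J (w))) (J (x))) + (br (br (br (y) (z)) (x)) (w)) - (br (br (w) (J (x))) (J (br (y) (z))))"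
    by (simp add: anti norm algebra_simps)
  have n1: "(br (br (br (y) (z)) (J (w))) (J (x))) + (br (br (br (y) (z)) (x)) (w)) - (br (br (w) (J (x))) (J (br (y) (z)))) = 0"
    using r1 unfolding e1 .
  have r2: "br (br (w) (br (y) (z)) + br (y) (br (z) (w)) + br (z) (br (w) (y))) (x) = 0"
    using jac[of "w" "y" "z"] by (simp add: b01 b02 J0)
  have e2: "br (br (w) (br (y) (z)) + br (y) (br (z) (w)) + br (z) (br (w) (y))) (x) = - (br (br (br (w) (y)) (z)) (x)) + (br (br (br (w) (z)) (y)) (x)) - (br (br (br (y) (z)) (w)) (x))"
    by (simp add: anti norm algebra_simps)
  have n2: "- (br (br (br (w) (y)) (z)) (x)) + (br (br (br (w) (z)) (y)) (x)) - (br (br (br (y) (z)) (w)) (x)) = 0"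
    using r2 unfolding e2 .
  have r3: "br (w) (br (x) (br (y) (z))) + br (x) (br (br (y) (z)) (w)) + br (br (y) (z)) (br (w) (x)) = 0"
    using jac[of "w" "x" "br (y) (z)"] by (simp add: b01 b02 J0)
  have e3: "br (w) (br (x) (br (y) (z))) + br (x) (br (br (y) (z)) (w)) + br (br (y) (z)) (br (w) (x)) = - (br (br (br (y) (z)) (w)) (x)) + (br (br (br (y) (z)) (x)) (w)) - (br (br (w) (x)) (br (y) (z)))"
    by (simp add: anti norm algebra_simps)
  have n3: "- (br (br (br (y) (z)) (w)) (x)) + (br (br (br (y) (z)) (x)) (w)) - (br (br (w) (x)) (br (y) (z))) = 0"
    using r3 unfolding e3 .
  have r4: "br (br (J (w)) (br (x) (z)) + br (x) (br (z) (J (w))) + br (z) (br (J (w)) (x))) (J (y)) = 0"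
    using jac[of "J (w)" "x" "z"] by (simp add: b01 b02 J0)
  have e4: "br (br (J (w)) (br (x) (z)) + br (x) (br (z) (J (w))) + br (z) (br (J (w)) (x))) (J (y)) = (br (br (br (w) (J (x))) (z)) (J (y))) - (br (br (br (w) (J (z))) (x)) (J (y))) - (br (br (br (x) (z)) (J (w))) (J (y)))"
    by (simp add: anti norm algebra_simps)
  have n4: "(br (br (br (w) (J (x))) (z)) (J (y))) - (br (br (br (w) (J (z))) (x)) (J (y))) - (br (br (br (x) (z)) (J (w))) (J (y))) = 0"
    using r4 unfolding e4 .
  have r5: "br (w) (br (J (br (x) (z))) (J (y))) + br (J (br (x) (z))) (br (J (y)) (w)) + br (J (y)) (br (w) (J (br (x) (z)))) = 0"
    using jac[of "w" "J (br (x) (z))" "J (y)"] by (simp add: b01 b02 J0)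
  have e5: "br (w) (br (J (br (x) (z))) (J (y))) + br (J (br (x) (z))) (br (J (y)) (w)) + br (J (y)) (br (w) (J (br (x) (z)))) = - (br (br (br (x) (z)) (J (w))) (J (y))) - (br (br (br (x) (z)) (y)) (w)) + (br (br (w) (J (y))) (J (br (x) (z))))"
    by (simp add: anti norm algebra_simps)
  have n5: "- (br (br (br (x) (z)) (J (w))) (J (y))) - (br (br (br (x) (z)) (y)) (w)) + (br (br (w) (J (y))) (J (br (x) (z)))) = 0"
    using r5 unfolding e5 .
  have r6: "br (br (w) (br (x) (z)) + br (x) (br (z) (w)) + br (z) (br (w) (x))) (y) = 0"
    using jac[of "w" "x" "z"] by (simp add: b01 b02 J0)
  have e6: "br (br (w) (br (x) (z)) + br (x) (br (z) (w)) + br (z) (br (w) (x))) (y) = - (br (br (br (w) (x)) (z)) (y)) + (br (br (br (w) (z)) (x)) (y)) - (br (br (br (x) (z)) (w)) (y))"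
    by (simp add: anti norm algebra_simps)
  have n6: "- (br (br (br (w) (x)) (z)) (y)) + (br (br (br (w) (z)) (x)) (y)) - (br (br (br (x) (z)) (w)) (y)) = 0"
    using r6 unfolding e6 .
  have r7: "br (w) (br (br (x) (z)) (y)) + br (br (x) (z)) (br (y) (w)) + br (y) (br (w) (br (x) (z))) = 0"
    using jac[of "w" "br (x) (z)" "y"] by (simp add: b01 b02 J0)
  have e7: "br (w) (br (br (x) (z)) (y)) + br (br (x) (z)) (br (y) (w)) + br (y) (br (w) (br (x) (z))) = (br (br (br (x) (z)) (w)) (y)) - (br (br (br (x) (z)) (y)) (w)) + (br (br (w) (y)) (br (x) (z)))"
    by (simp add: anti norm algebra_simps)
  have n7: "(br (br (br (x) (z)) (w)) (y)) - (br (br (br (x) (z)) (y)) (w)) + (br (br (w) (y)) (br (x) (z))) = 0"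
    using r7 unfolding e7 .
  have r8: "br (br (w) (z)) (br (x) (y)) + br (x) (br (y) (br (w) (z))) + br (y) (br (br (w) (z)) (x)) = 0"
    using jac[of "br (w) (z)" "x" "y"] by (simp add: b01 b02 J0)
  have e8: "br (br (w) (z)) (br (x) (y)) + br (x) (br (y) (br (w) (z))) + br (y) (br (br (w) (z)) (x)) = - (br (br (br (w) (z)) (x)) (y)) + (br (br (br (w) (z)) (y)) (x)) + (br (br (w) (z)) (br (x) (y)))"
    by (simp add: anti norm algebra_simps)
  have n8: "- (br (br (br (w) (z)) (x)) (y)) + (br (br (br (w) (z)) (y)) (x)) + (br (br (w) (z)) (br (x) (y))) = 0"
    using r8 unfolding e8 .
  have r9: "br (J (br (w) (J (y)))) (br (x) (z)) + br (x) (br (z) (J (br (w) (J (y))))) + br (z) (br (J (br (w) (J (y)))) (x)) = 0"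
    using jac[of "J (br (w) (J (y)))" "x" "z"] by (simp add: b01 b02 J0)
  have e9: "br (J (br (w) (J (y)))) (br (x) (z)) + br (x) (br (z) (J (br (w) (J (y))))) + br (z) (br (J (br (w) (J (y)))) (x)) = (br (br (br (w) (J (y))) (J (x))) (z)) - (br (br (br (w) (J (y))) (J (z))) (x)) - (br (br (w) (J (y))) (J (br (x) (z))))"
    by (simp add: anti norm algebra_simps)
  have n9: "(br (br (br (w) (J (y))) (J (x))) (z)) - (br (br (br (w) (J (y))) (J (z))) (x)) - (br (br (w) (J (y))) (J (br (x) (z)))) = 0"
    using r9 unfolding e9 .
  have r10: "br (br (w) (J (y))) (br (J (x)) (z)) + br (J (x)) (br (z) (br (w) (J (y)))) + br (z) (br (br (w) (J (y))) (J (x))) = 0"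
    using jac[of "br (w) (J (y))" "J (x)" "z"] by (simp add: b01 b02 J0)
  have e10: "br (br (w) (J (y))) (br (J (x)) (z)) + br (J (x)) (br (z) (br (w) (J (y)))) + br (z) (br (br (w) (J (y))) (J (x))) = - (br (br (br (w) (J (y))) (J (x))) (z)) + (br (br (br (w) (J (y))) (z)) (J (x))) - (br (br (w) (J (y))) (br (x) (J (z))))"
    by (simp add: anti norm algebra_simps)
  have n10: "- (br (br (br (w) (J (y))) (J (x))) (z)) + (br (br (br (w) (J (y))) (z)) (J (x))) - (br (br (w) (J (y))) (br (x) (J (z)))) = 0"
    using r10 unfolding e10 .
  have r11: "br (br (w) (br (J (y)) (z)) + br (J (y)) (br (z) (w)) + br (z) (br (w) (J (y)))) (J (x)) = 0"
    using jac[of "w" "J (y)" "z"] by (simp add: b01 b02 J0)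
  have e11: "br (br (w) (br (J (y)) (z)) + br (J (y)) (br (z) (w)) + br (z) (br (w) (J (y)))) (J (x)) = - (br (br (br (w) (J (y))) (z)) (J (x))) + (br (br (br (w) (z)) (J (y))) (J (x))) + (br (br (br (y) (J (z))) (w)) (J (x)))"
    by (simp add: anti norm algebra_simps)
  have n11: "- (br (br (br (w) (J (y))) (z)) (J (x))) + (br (br (br (w) (z)) (J (y))) (J (x))) + (br (br (br (y) (J (z))) (w)) (J (x))) = 0"
    using r11 unfolding e11 .
  have r12: "br (br (w) (br (y) (J (z))) + br (y) (br (J (z)) (w)) + br (J (z)) (br (w) (y))) (J (x)) = 0"
    using jac[of "w" "y" "J (z)"] by (simp add: b01 b02 J0)
  have e12: "br (br (w) (br (y) (J (z))) + br (y) (br (J (z)) (w)) + br (J (z)) (br (w) (y))) (J (x)) = - (br (br (br (w) (y)) (J (z))) (J (x))) + (br (br (br (w) (J (z))) (y)) (J (x))) - (br (br (br (y) (J (z))) (w)) (J (x)))"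
    by (simp add: anti norm algebra_simps)
  have n12: "- (br (br (br (w) (y)) (J (z))) (J (x))) + (br (br (br (w) (J (z))) (y)) (J (x))) - (br (br (br (y) (J (z))) (w)) (J (x))) = 0"
    using r12 unfolding e12 .
  have r13: "br (br (w) (br (J (x)) (z)) + br (J (x)) (br (z) (w)) + br (z) (br (w) (J (x)))) (J (y)) = 0"
    using jac[of "w" "J (x)" "z"] by (simp add: b01 b02 J0)
  have e13: "br (br (w) (br (J (x)) (z)) + br (J (x)) (br (z) (w)) + br (z) (br (w) (J (x)))) (J (y)) = - (br (br (br (w) (J (x))) (z)) (J (y))) + (br (br (br (w) (z)) (J (x))) (J (y))) + (br (br (br (x) (J (z))) (w)) (J (y)))"
    by (simp add: anti norm algebra_simps)
  have n13: "- (br (br (br (w) (J (x))) (z)) (J (y))) + (br (br (br (w) (z)) (J (x))) (J (y))) + (br (br (br (x) (J (z))) (w)) (J (y))) = 0"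
    using r13 unfolding e13 .
  have r14: "br (br (w) (br (x) (J (z))) + br (x) (br (J (z)) (w)) + br (J (z)) (br (w) (x))) (J (y)) = 0"
    using jac[of "w" "x" "J (z)"] by (simp add: b01 b02 J0)
  have e14: "br (br (w) (br (x) (J (z))) + br (x) (br (J (z)) (w)) + br (J (z)) (br (w) (x))) (J (y)) = - (br (br (br (w) (x)) (J (z))) (J (y))) + (br (br (br (w) (J (z))) (x)) (J (y))) - (br (br (br (x) (J (z))) (w)) (J (y)))"
    by (simp add: anti norm algebra_simps)
  have n14: "- (br (br (br (w) (x)) (J (z))) (J (y))) + (br (br (br (w) (J (z))) (x)) (J (y))) - (br (br (br (x) (J (z))) (w)) (J (y))) = 0"
    using r14 unfolding e14 .
  have r15: "br (br (w) (z)) (br (J (x)) (J (y))) + br (J (x)) (br (J (y)) (br (w) (z))) + br (J (y)) (br (br (w) (z)) (J (x))) = 0"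
    using jac[of "br (w) (z)" "J (x)" "J (y)"] by (simp add: b01 b02 J0)
  have e15: "br (br (w) (z)) (br (J (x)) (J (y))) + br (J (x)) (br (J (y)) (br (w) (z))) + br (J (y)) (br (br (w) (z)) (J (x))) = - (br (br (br (w) (z)) (J (x))) (J (y))) + (br (br (br (w) (z)) (J (y))) (J (x))) + (br (br (w) (z)) (br (x) (y)))"
    by (simp add: anti norm algebra_simps)
  have n15: "- (br (br (br (w) (z)) (J (x))) (J (y))) + (br (br (br (w) (z)) (J (y))) (J (x))) + (br (br (w) (z)) (br (x) (y))) = 0"
    using r15 unfolding e15 .
  have r16: "br (br (w) (y)) (br (J (x)) (J (z))) + br (J (x)) (br (J (z)) (br (w) (y))) + br (J (z)) (br (br (w) (y)) (J (x))) = 0"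
    using jac[of "br (w) (y)" "J (x)" "J (z)"] by (simp add: b01 b02 J0)
  have e16: "br (br (w) (y)) (br (J (x)) (J (z))) + br (J (x)) (br (J (z)) (br (w) (y))) + br (J (z)) (br (br (w) (y)) (J (x))) = - (br (br (br (w) (y)) (J (x))) (J (z))) + (br (br (br (w) (y)) (J (z))) (J (x))) + (br (br (w) (y)) (br (x) (z)))"
    by (simp add: anti norm algebra_simps)
  have n16: "- (br (br (br (w) (y)) (J (x))) (J (z))) + (br (br (br (w) (y)) (J (z))) (J (x))) + (br (br (w) (y)) (br (x) (z))) = 0"
    using r16 unfolding e16 .
  have r17: "br (br (J (w)) (br (y) (J (z))) + br (y) (br (J (z)) (J (w))) + br (J (z)) (br (J (w)) (y))) (x) = 0"
    using jac[of "J (w)" "y" "J (z)"] by (simp add: b01 b02 J0)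
  have e17: "br (br (J (w)) (br (y) (J (z))) + br (y) (br (J (z)) (J (w))) + br (J (z)) (br (J (w)) (y))) (x) = (br (br (br (w) (J (y))) (J (z))) (x)) + (br (br (br (w) (z)) (y)) (x)) - (br (br (br (y) (J (z))) (J (w))) (x))"
    by (simp add: anti norm algebra_simps)
  have n17: "(br (br (br (w) (J (y))) (J (z))) (x)) + (br (br (br (w) (z)) (y)) (x)) - (br (br (br (y) (J (z))) (J (w))) (x)) = 0"
    using r17 unfolding e17 .
  have r18: "br (w) (br (x) (J (br (y) (J (z))))) + br (x) (br (J (br (y) (J (z)))) (w)) + br (J (br (y) (J (z)))) (br (w) (x)) = 0"
    using jac[of "w" "x" "J (br (y) (J (z)))"] by (simp add: b01 b02 J0)
  have e18: "br (w) (br (x) (J (br (y) (J (z))))) + br (x) (br (J (br (y) (J (z)))) (w)) + br (J (br (y) (J (z)))) (br (w) (x)) = (br (br (br (y) (J (z))) (J (w))) (x)) - (br (br (br (y) (J (z))) (J (x))) (w)) - (br (br (w) (x)) (J (br (y) (J (z)))))"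
    by (simp add: anti norm algebra_simps)
  have n18: "(br (br (br (y) (J (z))) (J (w))) (x)) - (br (br (br (y) (J (z))) (J (x))) (w)) - (br (br (w) (x)) (J (br (y) (J (z))))) = 0"
    using r18 unfolding e18 .
  have r19: "br (w) (br (J (x)) (br (y) (J (z)))) + br (J (x)) (br (br (y) (J (z))) (w)) + br (br (y) (J (z))) (br (w) (J (x))) = 0"
    using jac[of "w" "J (x)" "br (y) (J (z))"] by (simp add: b01 b02 J0)
  have e19: "br (w) (br (J (x)) (br (y) (J (z)))) + br (J (x)) (br (br (y) (J (z))) (w)) + br (br (y) (J (z))) (br (w) (J (x))) = - (br (br (br (y) (J (z))) (w)) (J (x))) + (br (br (br (y) (J (z))) (J (x))) (w)) - (br (br (w) (J (x))) (br (y) (J (z))))"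
    by (simp add: anti norm algebra_simps)
  have n19: "- (br (br (br (y) (J (z))) (w)) (J (x))) + (br (br (br (y) (J (z))) (J (x))) (w)) - (br (br (w) (J (x))) (br (y) (J (z)))) = 0"
    using r19 unfolding e19 .
  have r20: "br (J (br (w) (J (x)))) (br (y) (z)) + br (y) (br (z) (J (br (w) (J (x))))) + br (z) (br (J (br (w) (J (x)))) (y)) = 0"
    using jac[of "J (br (w) (J (x)))" "y" "z"] by (simp add: b01 b02 J0)
  have e20: "br (J (br (w) (J (x)))) (br (y) (z)) + br (y) (br (z) (J (br (w) (J (x))))) + br (z) (br (J (br (w) (J (x)))) (y)) = (br (br (br (w) (J (x))) (J (y))) (z)) - (br (br (br (w) (J (x))) (J (z))) (y)) - (br (br (w) (J (x))) (J (br (y) (z))))"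
    by (simp add: anti norm algebra_simps)
  have n20: "(br (br (br (w) (J (x))) (J (y))) (z)) - (br (br (br (w) (J (x))) (J (z))) (y)) - (br (br (w) (J (x))) (J (br (y) (z)))) = 0"
    using r20 unfolding e20 .
  have r21: "br (br (w) (J (x))) (br (J (y)) (z)) + br (J (y)) (br (z) (br (w) (J (x)))) + br (z) (br (br (w) (J (x))) (J (y))) = 0"
    using jac[of "br (w) (J (x))" "J (y)" "z"] by (simp add: b01 b02 J0)
  have e21: "br (br (w) (J (x))) (br (J (y)) (z)) + br (J (y)) (br (z) (br (w) (J (x)))) + br (z) (br (br (w) (J (x))) (J (y))) = - (br (br (br (w) (J (x))) (J (y))) (z)) + (br (br (br (w) (J (x))) (z)) (J (y))) - (br (br (w) (J (x))) (br (y) (J (z))))"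
    by (simp add: anti norm algebra_simps)
  have n21: "- (br (br (br (w) (J (x))) (J (y))) (z)) + (br (br (br (w) (J (x))) (z)) (J (y))) - (br (br (w) (J (x))) (br (y) (J (z)))) = 0"
    using r21 unfolding e21 .
  have r22: "br (J (br (w) (x))) (br (y) (J (z))) + br (y) (br (J (z)) (J (br (w) (x)))) + br (J (z)) (br (J (br (w) (x))) (y)) = 0"
    using jac[of "J (br (w) (x))" "y" "J (z)"] by (simp add: b01 b02 J0)
  have e22: "br (J (br (w) (x))) (br (y) (J (z))) + br (y) (br (J (z)) (J (br (w) (x)))) + br (J (z)) (br (J (br (w) (x))) (y)) = (br (br (br (w) (x)) (J (y))) (J (z))) + (br (br (br (w) (x)) (z)) (y)) - (br (br (w) (x)) (J (br (y) (J (z)))))"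
    by (simp add: anti norm algebra_simps)
  have n22: "(br (br (br (w) (x)) (J (y))) (J (z))) + (br (br (br (w) (x)) (z)) (y)) - (br (br (w) (x)) (J (br (y) (J (z))))) = 0"
    using r22 unfolding e22 .
  have r23: "br (br (w) (x)) (br (J (y)) (J (z))) + br (J (y)) (br (J (z)) (br (w) (x))) + br (J (z)) (br (br (w) (x)) (J (y))) = 0"
    using jac[of "br (w) (x)" "J (y)" "J (z)"] by (simp add: b01 b02 J0)
  have e23: "br (br (w) (x)) (br (J (y)) (J (z))) + br (J (y)) (br (J (z)) (br (w) (x))) + br (J (z)) (br (br (w) (x)) (J (y))) = - (br (br (br (w) (x)) (J (y))) (J (z))) + (br (br (br (w) (x)) (J (z))) (J (y))) + (br (br (w) (x)) (br (y) (z)))"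
    by (simp add: anti norm algebra_simps)
  have n23: "- (br (br (br (w) (x)) (J (y))) (J (z))) + (br (br (br (w) (x)) (J (z))) (J (y))) + (br (br (w) (x)) (br (y) (z))) = 0"
    using r23 unfolding e23 .
  have r24: "br (br (J (w)) (br (x) (J (z))) + br (x) (br (J (z)) (J (w))) + br (J (z)) (br (J (w)) (x))) (y) = 0"
    using jac[of "J (w)" "x" "J (z)"] by (simp add: b01 b02 J0)
  have e24: "br (br (J (w)) (br (x) (J (z))) + br (x) (br (J (z)) (J (w))) + br (J (z)) (br (J (w)) (x))) (y) = (br (br (br (w) (J (x))) (J (z))) (y)) + (br (br (br (w) (z)) (x)) (y)) - (br (br (br (x) (J (z))) (J (w))) (y))"
    by (simp add: anti norm algebra_simps)
  have n24: "(br (br (br (w) (J (x))) (J (z))) (y)) + (br (br (br (w) (z)) (x)) (y)) - (br (br (br (x) (J (z))) (J (w))) (y)) = 0"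
    using r24 unfolding e24 .
  have r25: "br (w) (br (J (br (x) (J (z)))) (y)) + br (J (br (x) (J (z)))) (br (y) (w)) + br (y) (br (w) (J (br (x) (J (z))))) = 0"
    using jac[of "w" "J (br (x) (J (z)))" "y"] by (simp add: b01 b02 J0)
  have e25: "br (w) (br (J (br (x) (J (z)))) (y)) + br (J (br (x) (J (z)))) (br (y) (w)) + br (y) (br (w) (J (br (x) (J (z))))) = - (br (br (br (x) (J (z))) (J (w))) (y)) + (br (br (br (x) (J (z))) (J (y))) (w)) + (br (br (w) (y)) (J (br (x) (J (z)))))"
    by (simp add: anti norm algebra_simps)
  have n25: "- (br (br (br (x) (J (z))) (J (w))) (y)) + (br (br (br (x) (J (z))) (J (y))) (w)) + (br (br (w) (y)) (J (br (x) (J (z))))) = 0"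
    using r25 unfolding e25 .
  have r26: "br (w) (br (br (x) (J (z))) (J (y))) + br (br (x) (J (z))) (br (J (y)) (w)) + br (J (y)) (br (w) (br (x) (J (z)))) = 0"
    using jac[of "w" "br (x) (J (z))" "J (y)"] by (simp add: b01 b02 J0)
  have e26: "br (w) (br (br (x) (J (z))) (J (y))) + br (br (x) (J (z))) (br (J (y)) (w)) + br (J (y)) (br (w) (br (x) (J (z)))) = (br (br (br (x) (J (z))) (w)) (J (y))) - (br (br (br (x) (J (z))) (J (y))) (w)) + (br (br (w) (J (y))) (br (x) (J (z))))"
    by (simp add: anti norm algebra_simps)
  have n26: "(br (br (br (x) (J (z))) (w)) (J (y))) - (br (br (br (x) (J (z))) (J (y))) (w)) + (br (br (w) (J (y))) (br (x) (J (z)))) = 0"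
    using r26 unfolding e26 .
  have r27: "br (J (br (w) (y))) (br (x) (J (z))) + br (x) (br (J (z)) (J (br (w) (y)))) + br (J (z)) (br (J (br (w) (y))) (x)) = 0"
    using jac[of "J (br (w) (y))" "x" "J (z)"] by (simp add: b01 b02 J0)
  have e27: "br (J (br (w) (y))) (br (x) (J (z))) + br (x) (br (J (z)) (J (br (w) (y)))) + br (J (z)) (br (J (br (w) (y))) (x)) = (br (br (br (w) (y)) (J (x))) (J (z))) + (br (br (br (w) (y)) (z)) (x)) - (br (br (w) (y)) (J (br (x) (J (z)))))"
    by (simp add: anti norm algebra_simps)
  have n27: "(br (br (br (w) (y)) (J (x))) (J (z))) + (br (br (br (w) (y)) (z)) (x)) - (br (br (w) (y)) (J (br (x) (J (z))))) = 0"
    using r27 unfolding e27 .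
  have lin: "\<And>v0 v1 v2 v3 v4 v5 v6 v7 v8 v9 v10 v11 v12 v13 v14 v15 v16 v17 v18 v19 v20 v21 v22 v23 v24 v25 v26 v27 v28 v29 v30 v31 v32 v33 v34 v35 v36 v37 v38::'a. v10 - v17 - v25 = 0 \<Longrightarrow> v25 + v26 - v32 = 0 \<Longrightarrow> - v7 + v14 - v24 = 0 \<Longrightarrow> - v24 + v26 - v30 = 0 \<Longrightarrow> v4 - v16 - v19 = 0 \<Longrightarrow> - v19 - v20 + v36 = 0 \<Longrightarrow> - v1 + v12 - v18 = 0 \<Longrightarrow> v18 - v20 + v34 = 0 \<Longrightarrow> - v12 + v14 + v38 = 0 \<Longrightarrow> v9 - v11 - v36 = 0 \<Longrightarrow> - v9 + v10 - v37 = 0 \<Longrightarrow> - v10 + v15 + v27 = 0 \<Longrightarrow> - v8 + v17 - v27 = 0 \<Longrightarrow> - v4 + v13 + v21 = 0 \<Longrightarrow> - v2 + v16 - v21 = 0 \<Longrightarrow> - v13 + v15 + v38 = 0 \<Longrightarrow> - v6 + v8 + v34 = 0 \<Longrightarrow> v11 + v14 - v28 = 0 \<Longrightarrow> v28 - v29 - v31 = 0 \<Longrightarrow> - v27 + v29 - v33 = 0 \<Longrightarrow> v3 - v5 - v32 = 0 \<Longrightarrow> - v3 + v4 - v33 = 0 \<Longrightarrow> v0 + v1 - v31 = 0 \<Longrightarrow> - v0 + v2 + v30 = 0 \<Longrightarrow> v5 + v12 - v22 = 0 \<Longrightarrow> - v22 + v23 + v35 = 0 \<Longrightarrow> v21 -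 v23 + v37 = 0 \<Longrightarrow> v6 + v7 - v35 = 0 \<Longrightarrow> v38 = 0"
  proof -
    fix v0 v1 v2 v3 v4 v5 v6 v7 v8 v9 v10 v11 v12 v13 v14 v15 v16 v17 v18 v19 v20 v21 v22 v23 v24 v25 v26 v27 v28 v29 v30 v31 v32 v33 v34 v35 v36 v37 v38 :: 'a
    assume h: "v10 - v17 - v25 = 0" "v25 + v26 - v32 = 0" "- v7 + v14 - v24 = 0" "- v24 + v26 - v30 = 0" "v4 - v16 - v19 = 0" "- v19 - v20 + v36 = 0" "- v1 + v12 - v18 = 0" "v18 - v20 + v34 = 0" "- v12 + v14 + v38 = 0" "v9 - v11 - v36 = 0" "- v9 + v10 - v37 = 0" "- v10 + v15 + v27 = 0" "- v8 + v17 - v27 = 0" "- v4 + v13 + v21 = 0" "- v2 + v16 - v21 = 0" "- v13 + v15 + v38 = 0" "- v6 + v8 + v34 = 0" "v11 + v14 - v28 = 0" "v28 - v29 - v31 = 0" "- v27 + v29 - v33 = 0" "v3 - v5 - v32 = 0" "- v3 + v4 - v33 = 0" "v0 + v1 - v31 = 0" "- v0 + v2 + v30 = 0" "v5 + v12 - v22 = 0" "- v22 + v23 + v35 = 0" "v21 - v23 + v37 = 0" "v6 + v7 - v35 = 0"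
    have "v38 + v38 + v38 + v38 = - (v10 - v17 - v25) - (v25 + v26 - v32) - (- v7 + v14 - v24) + (- v24 + v26 - v30) + (v4 - v16 - v19) - (- v19 - v20 + v36) + (- v1 + v12 - v18) + (v18 - v20 + v34) + (- v12 + v14 + v38) + (- v12 + v14 + v38) - (v9 - v11 - v36) - (- v9 + v10 - v37) - (- v10 + v15 + v27) - (- v10 + v15 + v27) - (- v8 + v17 - v27) + (- v4 + v13 + v21) + (- v4 + v13 + v21) + (- v2 + v16 - v21) + (- v13 + v15 + v38) + (- v13 + v15 + v38) - (- v6 + v8 + v34) - (v11 + v14 - v28) - (v28 - v29 - v31) - (- v27 + v29 - v33) + (v3 - v5 - v32) + (- v3 + v4 - v33) + (v0 + v1 - v31) + (- v0 + v2 + v30) + (v5 + v12 - v22) - (- v22 + v23 + v35) - (v21 - v23 + v37) - (v6 + v7 - v35)"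
      by (simp add: algebra_simps)
    also have "\<dots> = 0" by (simp only: h diff_0_right diff_0 minus_zero add_0_right add_0_left)
    finally have "v38 + v38 + v38 + v38 = 0" .
    moreover have "(2 + 2 :: real) *\<^sub>R v38 = v38 + v38 + v38 + v38" by (simp only: scaleR_add_left scaleR_2 add.assoc)
    ultimately show "v38 = 0" by simp
  qed
  show ?thesis by (rule lin[OF n0 n1 n2 n3 n4 n5 n6 n7 n8 n9 n10 n11 n12 n13 n14 n15 n16 n17 n18 n19 n20 n21 n22 n23 n24 n25 n26 n27])
qed

lemma metab_UNIV:
  assumes L: "lie_algebra_on UNIV br" and C: "abelian_cs_on UNIV br J"
  shows "metab UNIV br"
  unfolding metab_def
proof (intro ballI)
  fix a b c d :: 'a
  have b1: "\<And>a b c. br (a + b) c = br a c + br b c" by (rule la_addL[OF L]) simp_all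
  have b2: "\<And>a b c. br a (b + c) = br a b + br a c" by (rule la_addR[OF L]) simp_all
  have an: "\<And>a b. br a b = - br b a" by (rule la_anti[OF L]) simp_all
  have ja: "\<And>a b. J (a + b) = J a + J b" by (rule cs_add[OF C]) simp_all
  have jj: "\<And>a. J (J a) = - a" by (rule cs_JJ[OF C]) simp_all
  have jjb: "\<And>a b. br (J a) (J b) = br a b" by (rule cs_JJbr[OF C]) simp_all
  have jac: "\<And>a b c. br a (br b c) + br b (br c a) + br c (br a b) = 0" by (rule la_jacobi[OF L]) simp_all
  show "br (br a b) (br c d) = 0"
    by (rule metabelian_core[of br J, OF b1 b2 an ja jj jjb jac])
qed

lemma preimage_ideal:
  assumes iso: "hol_quot_iso S K br J Q brQ JQ p" and L: "lie_algebra_on S br"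
    and C: "abelian_cs_on S br J" and I: "ideal_on Q brQ T" and JT: "JQ ` T \<subseteq> T"
  shows "ideal_on S br {x\<in>S. p x \<in> T} \<and> J ` {x\<in>S. p x \<in> T} \<subseteq> {x\<in>S. p x \<in> T}"
proof -
  have SS: "subspace S" using L la_subspace by blast
  have padd: "\<And>x y. x \<in> S \<Longrightarrow> y \<in> S \<Longrightarrow> p (x + y) = p x + p y"
    and pscale: "\<And>x c. x \<in> S \<Longrightarrow> p (c *\<^sub>R x) = c *\<^sub>R p x"
    and pim: "p ` S = Q"
    and phom: "\<And>x y. x \<in> S \<Longrightarrow> y \<in> S \<Longrightarrow> p (br x y) = brQ (p x) (p y)"
    and pJ: "\<And>x. x \<in> S \<Longrightarrow> p (J x) = JQ (p x)"
    using iso by (auto simp: hol_quot_iso_def linear_on_def)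
  have ST: "subspace T" and TQ: "T \<subseteq> Q" and Tid: "\<And>x y. x \<in> Q \<Longrightarrow> y \<in> T \<Longrightarrow> brQ x y \<in> T"
    using I by (auto simp: ideal_on_def)
  have p0: "p 0 = 0" using pscale[of 0 0] subspace_0[OF SS] by simp
  have "subspace {x\<in>S. p x \<in> T}"
    unfolding subspace_def
    using SS ST p0 padd pscale by (auto simp: subspace_0 subspace_add subspace_scale)
  moreover have "br x y \<in> {x\<in>S. p x \<in> T}" if "x \<in> S" "y \<in> {x\<in>S. p x \<in> T}" for x y
    using that la_closed[OF L] phom Tid pim by auto
  moreover have "J ` {x\<in>S. p x \<in> T} \<subseteq> {x\<in>S. p x \<in> T}"
    using JT pJ cs_closed[OF C] by auto
  ultimately show ?thesis by (auto simp: ideal_on_def)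
qed

lemma comp_iso:
  assumes iso: "hol_quot_iso S K br J Q brQ JQ p"
    and f: "hol_quot_iso T T' brQ JQ H brH JH f" and TQ: "T \<subseteq> Q"
  shows "hol_quot_iso {x\<in>S. p x \<in> T} {x\<in>S. p x \<in> T'} br J H brH JH (\<lambda>x. f (p x))"
proof -
  have padd: "\<And>x y. x \<in> S \<Longrightarrow> y \<in> S \<Longrightarrow> p (x + y) = p x + p y"
    and pscale: "\<And>x c. x \<in> S \<Longrightarrow> p (c *\<^sub>R x) = c *\<^sub>R p x"
    and pim: "p ` S = Q"
    and phom: "\<And>x y. x \<in> S \<Longrightarrow> y \<in> S \<Longrightarrow> p (br x y) = brQ (p x) (p y)"
    and pJ: "\<And>x. x \<in> S \<Longrightarrow> p (J x) = JQ (p x)"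
    using iso by (auto simp: hol_quot_iso_def linear_on_def)
  have fadd: "\<And>x y. x \<in> T \<Longrightarrow> y \<in> T \<Longrightarrow> f (x + y) = f x + f y"
    and fscale: "\<And>x c. x \<in> T \<Longrightarrow> f (c *\<^sub>R x) = c *\<^sub>R f x"
    and fim: "f ` T = H"
    and fker: "\<And>x. x \<in> T \<Longrightarrow> f x = 0 \<longleftrightarrow> x \<in> T'"
    and fhom: "\<And>x y. x \<in> T \<Longrightarrow> y \<in> T \<Longrightarrow> f (brQ x y) = brH (f x) (f y)"
    and fJ: "\<And>x. x \<in> T \<Longrightarrow> f (JQ x) = JH (f x)"
    using f by (auto simp: hol_quot_iso_def linear_on_def)
  have img: "(\<lambda>x. f (p x)) ` {x\<in>S. p x \<in> T} = H"
  proof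
    show "(\<lambda>x. f (p x)) ` {x\<in>S. p x \<in> T} \<subseteq> H" using fim by auto
    show "H \<subseteq> (\<lambda>x. f (p x)) ` {x\<in>S. p x \<in> T}"
    proof
      fix h assume "h \<in> H"
      then obtain y where y: "y \<in> T" "h = f y" using fim by auto
      then obtain x where x: "x \<in> S" "y = p x" using TQ pim by blast
      show "h \<in> (\<lambda>x. f (p x)) ` {x\<in>S. p x \<in> T}" using x y by auto
    qed
  qed
  define P where "P = {x\<in>S. p x \<in> T}"
  have PE: "x \<in> P \<Longrightarrow> x \<in> S \<and> p x \<in> T" for x by (simp add: P_def)
  have l1: "\<forall>x\<in>P. \<forall>y\<in>P. f (p (x + y)) = f (p x) + f (p y)"
    using PE padd fadd by simp
  have l2: "\<forall>x\<in>P. \<forall>c. f (p (c *\<^sub>R x)) = c *\<^sub>R f (p x)"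
    using PE pscale fscale by simp
  have l3: "\<forall>x\<in>P. f (p x) = 0 \<longleftrightarrow> x \<in> {x\<in>S. p x \<in> T'}"
    using PE fker by simp
  have l4: "\<forall>x\<in>P. \<forall>y\<in>P. f (p (br x y)) = brH (f (p x)) (f (p y))"
    using PE phom fhom by simp
  have l5: "\<forall>x\<in>P. f (p (J x)) = JH (f (p x))"
    using PE pJ fJ by simp
  show ?thesis
    unfolding hol_quot_iso_def linear_on_def
    using conjI[OF conjI[OF l1 l2] conjI[OF img[folded P_def] conjI[OF l3 conjI[OF l4 l5]]]]
    unfolding P_def .
qed

lemma id_iso: "hol_quot_iso K {0} br J K br J (\<lambda>x. x)"
  by (simp add: hol_quot_iso_def linear_on_def)


lemma gen:
  fixes S :: "'a::euclidean_space set"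
  assumes "lie_algebra_on S br" "abelian_cs_on S br J" "metab S br"
  shows "\<exists>(r::nat) (s::nat \<Rightarrow> 'a set).
           s 0 = {0} \<and> s r = S \<and>
           (\<forall>j<r. s j \<subset> s (Suc j)) \<and>
           (\<forall>j\<le>r. ideal_on S br (s j) \<and> J ` s j \<subseteq> s j) \<and>
           (\<forall>j\<in>{1..r}. \<exists>(H::'a set) brH JH (A::'a set) m f.
              lie_algebra_on H brH \<and> abelian_cs_on H brH JH \<and>
              comm_assoc_alg_on A m \<and>
              central_ext_of_aff H brH JH A m \<and>
              hol_quot_iso (s j) (s (j - 1)) br J H brH JH f)"
  using assms
proof (induction "dim S" arbitrary: S br J rule: less_induct)
  case less
  have L: "lie_algebra_on S br" and C: "abelian_cs_on S br J" and M: "metab S br"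
    using less.prems by auto
  have SS: "subspace S" using L la_subspace by blast
  have J0: "J 0 = 0" using cs_zero[OF C SS] .
  show ?case
  proof (cases "S = {0}")
    case True
    have "ideal_on S br {0}" using la_zeroR[OF L] SS subspace_0 by (auto simp: ideal_on_def)
    then show ?thesis using True J0
      by (intro exI[of _ 0] exI[of _ "\<lambda>_. {0}"]) auto
  next
    case False
    obtain K and A :: "'a set" and m where K: "K \<noteq> {0}" "ideal_on S br K" "J ` K \<subseteq> K"
      and Am: "comm_assoc_alg_on A m" "central_ext_of_aff K br J A m"
      using step_ideal[OF L C M False] by blast
    have LK: "lie_algebra_on K br" "abelian_cs_on K br J" using restrict_lie[OF L C K(2,3)] by auto
    have KS: "K \<subseteq> S" and SK: "subspace K" using K(2) by (auto simp: ideal_on_def)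
    obtain Q :: "'a set" and brQ JQ p where iso: "hol_quot_iso S K br J Q brQ JQ p"
      and LQ: "lie_algebra_on Q brQ" and CQ: "abelian_cs_on Q brQ JQ" and MQ: "metab Q brQ"
      and dQ: "dim Q < dim S"
      using quotient_exists[OF L C K(2,3) M K(1)] by blast
    obtain r t where t0: "t 0 = {0}" and tr: "t r = Q" and tch: "\<forall>j<r. t j \<subset> t (Suc j)"
      and tid: "\<forall>j\<le>r. ideal_on Q brQ (t j) \<and> JQ ` t j \<subseteq> t j"
      and tq: "\<forall>j\<in>{1..r}. \<exists>(H::'a set) brH JH (A::'a set) m f.
              lie_algebra_on H brH \<and> abelian_cs_on H brH JH \<and>
              comm_assoc_alg_on A m \<and>
              central_ext_of_aff H brH JH A m \<and>
              hol_quot_iso (t j) (t (j - 1)) brQ JQ H brH JH f"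
      using less.hyps[OF dQ LQ CQ MQ] by blast
    have pim: "p ` S = Q" and pker: "\<And>x. x \<in> S \<Longrightarrow> p x = 0 \<longleftrightarrow> x \<in> K"
      using iso by (auto simp: hol_quot_iso_def)
    have tQ: "j \<le> r \<Longrightarrow> t j \<subseteq> Q" for j using tid by (auto simp: ideal_on_def)
    define s where "s j = (if j = 0 then {0} else {x\<in>S. p x \<in> t (j - 1)})" for j
    have s0: "s 0 = {0}" by (simp add: s_def)
    have sS: "s (Suc j) = {x\<in>S. p x \<in> t j}" for j by (simp add: s_def)
    have s1: "s 1 = K" using sS[of 0] t0 pker KS by auto
    have "s (Suc r) = S" using sS[of r] tr pim by auto
    moreover have "\<forall>j<Suc r. s j \<subset> s (Suc j)"
    proof (intro allI impI)
      fix j assume j: "j < Suc r"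
      show "s j \<subset> s (Suc j)"
      proof (cases j)
        case 0
        then show ?thesis using s0 s1 K(1) SK subspace_0 by auto
      next
        case (Suc i)
        have i: "i < r" using j Suc by simp
        have sub: "t i \<subset> t (Suc i)" using tch i by blast
        then obtain y where y: "y \<in> t (Suc i)" "y \<notin> t i" by blast
        then have "y \<in> Q" using tQ[of "Suc i"] i by auto
        then obtain x where x: "x \<in> S" "y = p x" using pim by blast
        show ?thesis unfolding Suc sS using sub x y by auto
      qed
    qed
    moreover have "\<forall>j\<le>Suc r. ideal_on S br (s j) \<and> J ` s j \<subseteq> s j"
    proof (intro allI impI)
      fix j assume j: "j \<le> Suc r"
      show "ideal_on S br (s j) \<and> J ` s j \<subseteq> s j"
      proof (cases j)
        case 0
        then show ?thesis using s0 la_zeroR[OF L] SS subspace_0 J0 by (auto simp: ideal_on_def)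
      next
        case (Suc i)
        then have i: "i \<le> r" using j by simp
        show ?thesis unfolding Suc sS using preimage_ideal[OF iso L C] tid i by blast
      qed
    qed
    moreover have "\<forall>j\<in>{1..Suc r}. \<exists>(H::'a set) brH JH (A::'a set) m f.
              lie_algebra_on H brH \<and> abelian_cs_on H brH JH \<and>
              comm_assoc_alg_on A m \<and>
              central_ext_of_aff H brH JH A m \<and>
              hol_quot_iso (s j) (s (j - 1)) br J H brH JH f"
    proof
      fix j assume j: "j \<in> {1..Suc r}"
      show "\<exists>(H::'a set) brH JH (A::'a set) m f.
              lie_algebra_on H brH \<and> abelian_cs_on H brH JH \<and>
              comm_assoc_alg_on A m \<and>
              central_ext_of_aff H brH JH A m \<and>
              hol_quot_iso (s j) (s (j - 1)) br J H brH JH f"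
      proof (cases "j = 1")
        case True
        have "hol_quot_iso (s j) (s (j - 1)) br J K br J (\<lambda>x. x)"
          using True s0 s1 id_iso by simp
        then show ?thesis using LK Am by blast
      next
        case False
        define i where "i = j - 2"
        have i: "j = Suc (Suc i)" "i < r" using j False by (auto simp: i_def)
        then have "Suc i \<in> {1..r}" by simp
        then have "\<exists>(H::'a set) brH JH (A::'a set) m f.
              lie_algebra_on H brH \<and> abelian_cs_on H brH JH \<and>
              comm_assoc_alg_on A m \<and>
              central_ext_of_aff H brH JH A m \<and>
              hol_quot_iso (t (Suc i)) (t (Suc i - 1)) brQ JQ H brH JH f"
          by (rule bspec[OF tq])
        then obtain H :: "'a set" and brH JH and A' :: "'a set" and m' f where H: "lie_algebra_on H brH" "abelian_cs_on H brH JH"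
          "comm_assoc_alg_on A' m'" "central_ext_of_aff H brH JH A' m'"
          "hol_quot_iso (t (Suc i)) (t i) brQ JQ H brH JH f"
          by auto
        have "hol_quot_iso (s j) (s (j - 1)) br J H brH JH (\<lambda>x. f (p x))"
          unfolding i sS diff_Suc_1 using comp_iso[OF iso H(5) tQ[of "Suc i"]] i by simp
        then show ?thesis using H by blast
      qed
    qed
    ultimately show ?thesis using s0
      by (intro exI[of _ "Suc r"] exI[of _ s]) simp
  qed
qed

theorem mainTheorem1:
  fixes br :: "'a::euclidean_space \<Rightarrow> 'a \<Rightarrow> 'a" and J :: "'a \<Rightarrow> 'a"
  assumes "lie_algebra_on UNIV br"
    and "abelian_cs_on UNIV br J"
  shows "\<exists>(r::nat) (s::nat \<Rightarrow> 'a set).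
           s 0 = {0} \<and> s r = UNIV \<and>
           (\<forall>j<r. s j \<subset> s (Suc j)) \<and>
           (\<forall>j\<le>r. ideal_on UNIV br (s j) \<and> J ` s j \<subseteq> s j) \<and>
           (\<forall>j\<in>{1..r}. \<exists>(H::'a set) brH JH (A::'a set) m f.
              lie_algebra_on H brH \<and> abelian_cs_on H brH JH \<and>
              comm_assoc_alg_on A m \<and>
              central_ext_of_aff H brH JH A m \<and>
              hol_quot_iso (s j) (s (j - 1)) br J H brH JH f)"
  using gen[OF assms metab_UNIV[OF assms]] .

end
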